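(* Let $\pi$ be an $r$-homogeneous strongly log-concave distribution and $\mathcal{M}$ its associated matroid, and let $P^{\vee}_k$ and $P^{\wedge}_k$ be the down-up and up-down walks on $\mathcal{M}(k)$. Then: (1) for every $2\le k\le r$, $\rho(P^{\vee}_k)\ge \frac1k$; (2) for every $1\le k\le r-1$, $\rho(P^{\wedge}_k)\ge\frac{1}{k+1}$.
   Context: $\pi:2^{[n]}\to\mathbb{R}_{\ge0}$ has generating polynomial $g_\pi(x)=\sum_S\pi(S)\prod_{i\in S}x_i$; it is $r$-homogeneous if its support consists of $r$-sets; a polynomial with nonnegative coefficients is strongly log-concave if for every $J\subseteq[n]$, $\nabla^2\log(\partial_J p)$ is negative semidefinite at the all-ones vector; $\pi$ is strongly log-concave if $g_\pi$ is. The support $\mathcal{B}$ of such $\pi$ is the set of bases of a rank-$r$ matroid $\mathcal{M}=(E,\mathcal{I})$; $\mathcal{M}(k)$ denotes the independent sets of size $k$. Weights: $w(I)=(r-|I|)!\sum_{B\in\mathcal{B},B\supseteq I}\pi(B)$ for $I\in\mathcal{I}$ (up to a common positive constant), $w(I)=0$ otherwise; $\pi_k(I)\propto w(I)$ on $\mathcal{M}(k)$. Up-down walk, for $I,J\in\mathcal{M}(k)$: $P^{\wedge}_k(I,I)=\frac1{k+1}$; $P^{\wedge}_k(I,J)=\frac{w(I\cup J)}{(k+1)w(I)}$ if $I\cup J\in\mathcal{M}(k+1)$; $0$ otherwise. Down-up walk: $P^{\vee}_k(I,I)=\sum_{I'\in\mathcal{M}(k-1),I'\subset I}\frac{w(I)}{k\,w(I')}$;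 $P^{\vee}_k(I,J)=\frac{w(J)}{k\,w(I\cap J)}$ if $|I\cap J|=k-1$; $0$ if $|I\cap J|<k-1$. Both are reversible with stationary distribution $\pi_k$. For a reversible chain $P$ with stationary $\mu$ on finite $\Omega$: $\mathcal{E}_P(f,g)=\sum_{x,y}\mu(x)f(x)[I-P](x,y)g(y)$, $\mathrm{Ent}_\mu(f)=\mathbb{E}_\mu(f\log f)-\mathbb{E}_\mu f\log\mathbb{E}_\mu f$ for $f\ge0$ (with $0\log0=0$), and $\rho(P)=\inf\{\mathcal{E}_P(f,\log f)/\mathrm{Ent}_\mu(f): f:\Omega\to\mathbb{R}_{\ge0},\ \mathrm{Ent}_\mu(f)\neq0\}$. *)

theory Defs
  imports "HOL-Analysis.Analysis" "HOL-Library.Extended_Real"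
begin

text \<open>Ground set [n] is rendered as {..<n}; vectors in R^n as functions nat => real.\<close>

definition gen_poly :: "nat \<Rightarrow> (nat set \<Rightarrow> real) \<Rightarrow> (nat \<Rightarrow> real) \<Rightarrow> real" where
  "gen_poly n \<pi> x = (\<Sum>S\<in>Pow {..<n}. \<pi> S * (\<Prod>i\<in>S. x i))"

definition partial :: "nat \<Rightarrow> ((nat \<Rightarrow> real) \<Rightarrow> real) \<Rightarrow> (nat \<Rightarrow> real) \<Rightarrow> real" where
  "partial i f = (\<lambda>x. deriv (\<lambda>t. f (x(i := t))) (x i))"

definition partial_set :: "nat set \<Rightarrow> ((nat \<Rightarrow> real) \<Rightarrow> real) \<Rightarrow> (nat \<Rightarrow> real) \<Rightarrow> real" where
  "partial_set J f = foldr partial (sorted_list_of_set J) f"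

definition hessian_nsd :: "nat \<Rightarrow> ((nat \<Rightarrow> real) \<Rightarrow> real) \<Rightarrow> (nat \<Rightarrow> real) \<Rightarrow> bool" where
  "hessian_nsd n h x \<longleftrightarrow>
     (\<forall>v::nat \<Rightarrow> real. (\<Sum>i<n. \<Sum>j<n. v i * partial i (partial j h) x * v j) \<le> 0)"

definition strongly_log_concave_poly :: "nat \<Rightarrow> ((nat \<Rightarrow> real) \<Rightarrow> real) \<Rightarrow> bool" where
  "strongly_log_concave_poly n p \<longleftrightarrow>
     (\<forall>J. J \<subseteq> {..<n} \<longrightarrow> hessian_nsd n (\<lambda>x. ln (partial_set J p x)) (\<lambda>_. 1))"

definition r_homogeneous :: "nat \<Rightarrow> nat \<Rightarrow> (nat set \<Rightarrow> real) \<Rightarrow> bool" where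
  "r_homogeneous n r \<pi> \<longleftrightarrow> (\<forall>S. \<pi> S \<noteq> 0 \<longrightarrow> S \<subseteq> {..<n} \<and> card S = r)"

definition distribution :: "nat \<Rightarrow> (nat set \<Rightarrow> real) \<Rightarrow> bool" where
  "distribution n \<pi> \<longleftrightarrow> (\<forall>S. \<pi> S \<ge> 0) \<and> (\<forall>S. \<not> S \<subseteq> {..<n} \<longrightarrow> \<pi> S = 0)
      \<and> (\<Sum>S\<in>Pow {..<n}. \<pi> S) = 1"

definition bases :: "nat \<Rightarrow> (nat set \<Rightarrow> real) \<Rightarrow> nat set set" where
  "bases n \<pi> = {B. B \<subseteq> {..<n} \<and> \<pi> B \<noteq> 0}"

definition indep_k :: "nat \<Rightarrow> (nat set \<Rightarrow> real) \<Rightarrow> nat \<Rightarrow> nat set set" where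
  "indep_k n \<pi> k = {I. \<exists>B\<in>bases n \<pi>. I \<subseteq> B \<and> card I = k}"

definition weight :: "nat \<Rightarrow> nat \<Rightarrow> (nat set \<Rightarrow> real) \<Rightarrow> nat set \<Rightarrow> real" where
  "weight n r \<pi> I =
     (if \<exists>B\<in>bases n \<pi>. I \<subseteq> B
      then fact (r - card I) * (\<Sum>B\<in>{B\<in>bases n \<pi>. I \<subseteq> B}. \<pi> B) else 0)"

definition pi_k :: "nat \<Rightarrow> nat \<Rightarrow> (nat set \<Rightarrow> real) \<Rightarrow> nat \<Rightarrow> nat set \<Rightarrow> real" where
  "pi_k n r \<pi> k I = weight n r \<pi> I / (\<Sum>J\<in>indep_k n \<pi> k. weight n r \<pi> J)"

definition up_down :: "nat \<Rightarrow> nat \<Rightarrow> (nat set \<Rightarrow> real) \<Rightarrow> nat \<Rightarrow> nat set \<Rightarrow> nat set \<Rightarrow> real" where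
  "up_down n r \<pi> k I J =
     (if I = J then 1 / (real k + 1)
      else if I \<union> J \<in> indep_k n \<pi> (k + 1)
      then weight n r \<pi> (I \<union> J) / ((real k + 1) * weight n r \<pi> I)
      else 0)"

definition down_up :: "nat \<Rightarrow> nat \<Rightarrow> (nat set \<Rightarrow> real) \<Rightarrow> nat \<Rightarrow> nat set \<Rightarrow> nat set \<Rightarrow> real" where
  "down_up n r \<pi> k I J =
     (if I = J then (\<Sum>I'\<in>{I'\<in>indep_k n \<pi> (k - 1). I' \<subset> I}.
                        weight n r \<pi> I / (real k * weight n r \<pi> I'))
      else if card (I \<inter> J) = k - 1
      then weight n r \<pi> J / (real k * weight n r \<pi> (I \<inter> J))
      else 0)"

definition dirichlet :: "'s set \<Rightarrow> ('s \<Rightarrow> real) \<Rightarrow> ('s \<Rightarrow> 's \<Rightarrow> real) \<Rightarrow> ('s \<Rightarrow> real) \<Rightarrow> ('s \<Rightarrow> real) \<Rightarrow> real" where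
  "dirichlet \<Omega> \<mu> P f g =
     (\<Sum>x\<in>\<Omega>. \<Sum>y\<in>\<Omega>. \<mu> x * f x * ((if x = y then 1 else 0) - P x y) * g y)"

definition entropy :: "'s set \<Rightarrow> ('s \<Rightarrow> real) \<Rightarrow> ('s \<Rightarrow> real) \<Rightarrow> real" where
  "entropy \<Omega> \<mu> f =
     (\<Sum>x\<in>\<Omega>. \<mu> x * (f x * ln (f x))) - (\<Sum>x\<in>\<Omega>. \<mu> x * f x) * ln (\<Sum>x\<in>\<Omega>. \<mu> x * f x)"

definition mlsc :: "'s set \<Rightarrow> ('s \<Rightarrow> real) \<Rightarrow> ('s \<Rightarrow> 's \<Rightarrow> real) \<Rightarrow> ereal" where
  "mlsc \<Omega> \<mu> P = Inf {ereal (dirichlet \<Omega> \<mu> P f (\<lambda>x. ln (f x)) / entropy \<Omega> \<mu> f) | f.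
       (\<forall>x\<in>\<Omega>. f x > 0) \<and> entropy \<Omega> \<mu> f \<noteq> 0}"

end

theory Submission
  imports Defs
begin

definition PF :: "nat set set \<Rightarrow> (nat set \<Rightarrow> real) \<Rightarrow> nat set \<Rightarrow> (nat \<Rightarrow> real) \<Rightarrow> real" where
  "PF F c T x = (\<Sum>S\<in>F. c S * (\<Prod>j\<in>S - T. x j))"

lemma PF_upd:
  assumes "finite F" "\<forall>S\<in>F. finite S"
  shows "PF F c T (x(i:=t)) = PF {S\<in>F. \<not>(i\<in>S \<and> i\<notin>T)} c T x + t * PF {S\<in>F. i\<in>S \<and> i\<notin>T} c (insert i T) x"
proof -
  have a: "c S * (\<Prod>j\<in>S - T. (x(i:=t)) j) = (if i\<in>S \<and> i\<notin>T then t * (c S * (\<Prod>j\<in>S - insert i T. x j)) else c S * (\<Prod>j\<in>S - T. x j))" if "S \<in> F" for S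
  proof (cases "i\<in>S \<and> i\<notin>T")
    case True
    have fin: "finite (S - T)" using assms that by auto
    have "(\<Prod>j\<in>S - T. (x(i:=t)) j) = (x(i:=t)) i * (\<Prod>j\<in>S - T - {i}. (x(i:=t)) j)"
      using True fin by (intro prod.remove) auto
    also have "(\<Prod>j\<in>S - T - {i}. (x(i:=t)) j) = (\<Prod>j\<in>S - insert i T. x j)"
      by (intro prod.cong) auto
    finally show ?thesis using True by simp
  next
    case False
    then have "(\<Prod>j\<in>S - T. (x(i:=t)) j) = (\<Prod>j\<in>S - T. x j)"
      by (intro prod.cong) auto
    then show ?thesis using False by (simp only: if_False)
  qed
  have "PF F c T (x(i:=t)) = (\<Sum>S\<in>F. (if i\<in>S \<and> i\<notin>T then t * (c S * (\<Prod>j\<in>S - insert i T. x j)) else c S * (\<Prod>j\<in>S - T. x j)))"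
    unfolding PF_def using a by (intro sum.cong) auto
  also have "\<dots> = (\<Sum>S\<in>F. (if \<not>(i\<in>S \<and> i\<notin>T) then c S * (\<Prod>j\<in>S - T. x j) else 0)) + (\<Sum>S\<in>F. (if i\<in>S \<and> i\<notin>T then t * (c S * (\<Prod>j\<in>S - insert i T. x j)) else 0))"
    by (subst sum.distrib[symmetric]) (intro sum.cong, auto)
  also have "\<dots> = PF {S\<in>F. \<not>(i\<in>S \<and> i\<notin>T)} c T x + t * PF {S\<in>F. i\<in>S \<and> i\<notin>T} c (insert i T) x"
    unfolding PF_def using assms(1) by (simp add: sum.inter_filter sum_distrib_left, intro sum.cong, auto)
  finally show ?thesis .
qed

lemma partial_PF:
  assumes "finite F" "\<forall>S\<in>F. finite S"
  shows "partial i (PF F c T) = PF {S\<in>F. i\<in>S \<and> i\<notin>T} c (insert i T)"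
proof
  fix x
  let ?a = "PF {S\<in>F. \<not>(i\<in>S \<and> i\<notin>T)} c T x" and ?b = "PF {S\<in>F. i\<in>S \<and> i\<notin>T} c (insert i T) x"
  have "(\<lambda>t. PF F c T (x(i:=t))) = (\<lambda>t. ?a + t * ?b)"
    using PF_upd[OF assms] by auto
  moreover have "((\<lambda>t. ?a + t * ?b) has_field_derivative ?b) (at (x i))"
    by (auto intro!: derivative_eq_intros)
  ultimately show "partial i (PF F c T) x = ?b"
    unfolding partial_def by (simp add: DERIV_imp_deriv)
qed

lemma foldr_partial_PF:
  assumes "finite F" "\<forall>S\<in>F. finite S" "distinct l"
  shows "foldr partial l (PF F c {}) = PF {S\<in>F. set l \<subseteq> S} c (set l)"
  using assms(3)
proof (induction l)
  case Nil
  then show ?case by simp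
next
  case (Cons a l)
  have "foldr partial (a # l) (PF F c {}) = partial a (PF {S\<in>F. set l \<subseteq> S} c (set l))"
    using Cons by simp
  also have "\<dots> = PF {S\<in>{S\<in>F. set l \<subseteq> S}. a\<in>S \<and> a\<notin>set l} c (insert a (set l))"
    using assms by (intro partial_PF) auto
  also have "{S\<in>{S\<in>F. set l \<subseteq> S}. a\<in>S \<and> a\<notin>set l} = {S\<in>F. set (a#l) \<subseteq> S}"
    using Cons.prems by auto
  finally show ?case by simp
qed

lemma partial_set_gen_poly:
  assumes "finite J"
  shows "partial_set J (gen_poly n p) = PF {S\<in>Pow {..<n}. J \<subseteq> S} p J"
proof -
  have g: "gen_poly n p = PF (Pow {..<n}) p {}"
    unfolding gen_poly_def PF_def by (intro ext) simp
  show ?thesis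
    unfolding partial_set_def g
    by (subst foldr_partial_PF) (auto simp: assms finite_subset)
qed

lemma PF_one_nonneg: "(\<And>S. c S \<ge> 0) \<Longrightarrow> PF F c T (\<lambda>_. 1) \<ge> 0"
  unfolding PF_def by (intro sum_nonneg) auto

lemma partial_ln_PF:
  assumes "finite F" "\<forall>S\<in>F. finite S" "PF F c T x > 0"
  shows "partial j (\<lambda>x. ln (PF F c T x)) x = PF {S\<in>F. j\<in>S \<and> j\<notin>T} c (insert j T) x / PF F c T x"
proof -
  let ?a = "PF {S\<in>F. \<not>(j\<in>S \<and> j\<notin>T)} c T x" and ?b = "PF {S\<in>F. j\<in>S \<and> j\<notin>T} c (insert j T) x"
  have e: "(\<lambda>t. ln (PF F c T (x(j:=t)))) = (\<lambda>t. ln (?a + t * ?b))"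
    using PF_upd[OF assms(1,2)] by auto
  have "PF F c T (x(j:=x j)) = ?a + x j * ?b" using PF_upd[OF assms(1,2)] by blast
  then have pos: "?a + x j * ?b > 0" using assms(3) by simp
  have "((\<lambda>t. ln (?a + t * ?b)) has_field_derivative ?b / (?a + x j * ?b)) (at (x j))"
    using pos by (auto intro!: derivative_eq_intros)
  then show ?thesis
    unfolding partial_def e using \<open>PF F c T (x(j:=x j)) = ?a + x j * ?b\<close>
    by (simp add: DERIV_imp_deriv)
qed

lemma hess_PF:
  assumes fin: "finite F" "\<forall>S\<in>F. finite S" and nn: "\<And>S. c S \<ge> 0"
    and q1: "PF F c T (\<lambda>_. 1) > 0"
  shows "partial i (partial j (\<lambda>x. ln (PF F c T x))) (\<lambda>_. 1) =
    (PF {S\<in>{S\<in>F. j\<in>S \<and> j\<notin>T}. i\<in>S \<and> i\<notin>insert j T} c (insert i (insert j T)) (\<lambda>_. 1) * PF F c T (\<lambda>_. 1)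
     - PF {S\<in>F. j\<in>S \<and> j\<notin>T} c (insert j T) (\<lambda>_. 1) * PF {S\<in>F. i\<in>S \<and> i\<notin>T} c (insert i T) (\<lambda>_. 1)) / (PF F c T (\<lambda>_. 1))^2"
proof -
  define one :: "nat \<Rightarrow> real" where "one = (\<lambda>_. 1)"
  define Fj where "Fj = {S\<in>F. j\<in>S \<and> j\<notin>T}"
  define a0 where "a0 = PF {S\<in>F. \<not>(i\<in>S \<and> i\<notin>T)} c T one"
  define b0 where "b0 = PF {S\<in>F. i\<in>S \<and> i\<notin>T} c (insert i T) one"
  define a1 where "a1 = PF {S\<in>Fj. \<not>(i\<in>S \<and> i\<notin>insert j T)} c (insert j T) one"
  define b1 where "b1 = PF {S\<in>Fj. i\<in>S \<and> i\<notin>insert j T} c (insert i (insert j T)) one"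
  have finj: "finite Fj" "\<forall>S\<in>Fj. finite S" using fin unfolding Fj_def by auto
  have u0: "PF F c T (one(i:=s)) = a0 + s * b0" for s
    unfolding a0_def b0_def using PF_upd[OF fin] by blast
  have u1: "PF Fj c (insert j T) (one(i:=s)) = a1 + s * b1" for s
    unfolding a1_def b1_def using PF_upd[OF finj] by blast
  have oi: "one(i:=1) = one" unfolding one_def by auto
  have a0nn: "a0 \<ge> 0" "b0 \<ge> 0" unfolding a0_def b0_def one_def using nn by (auto intro: PF_one_nonneg)
  have sum0: "a0 + b0 = PF F c T one" using u0[of 1] oi by simp
  have sum1: "a1 + b1 = PF Fj c (insert j T) one" using u1[of 1] oi by simp
  have pos: "a0 + s * b0 > 0" if "s > 0" for s
  proof (cases "b0 > 0")
    case True then show ?thesis using that a0nn by (simp add: add_nonneg_pos)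
  next
    case False then have "b0 = 0" using a0nn by simp
    then show ?thesis using sum0 q1 unfolding one_def by simp
  qed
  have ev: "\<forall>\<^sub>F s in nhds 1. partial j (\<lambda>x. ln (PF F c T x)) (one(i:=s)) = (a1 + s * b1) / (a0 + s * b0)"
  proof -
    have "\<forall>\<^sub>F s in nhds (1::real). s \<in> {0<..}"
      by (intro eventually_nhds_in_open) auto
    then show ?thesis
    proof (rule eventually_mono)
      fix s :: real assume "s \<in> {0<..}"
      then have "PF F c T (one(i:=s)) > 0" using pos u0 by simp
      then show "partial j (\<lambda>x. ln (PF F c T x)) (one(i:=s)) = (a1 + s * b1) / (a0 + s * b0)"
        using partial_ln_PF[OF fin] u0 u1 unfolding Fj_def by simp
    qed
  qed
  have "((\<lambda>s. (a1 + s * b1) / (a0 + s * b0)) has_field_derivative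
      (b1 * (a0 + 1 * b0) - (a1 + 1 * b1) * b0) / ((a0 + 1 * b0) * (a0 + 1 * b0))) (at 1)"
    using pos[of 1] by (auto intro!: derivative_eq_intros)
  then have "deriv (\<lambda>s. (a1 + s * b1) / (a0 + s * b0)) 1 = (b1 * (a0 + b0) - (a1 + b1) * b0) / (a0 + b0)^2"
    by (simp add: DERIV_imp_deriv power2_eq_square)
  moreover have "partial i (partial j (\<lambda>x. ln (PF F c T x))) one = deriv (\<lambda>s. (a1 + s * b1) / (a0 + s * b0)) 1"
    unfolding partial_def[of i] using ev by (simp add: one_def deriv_cong_ev)
  ultimately show ?thesis
    unfolding one_def[symmetric] using sum0 sum1 unfolding b0_def b1_def Fj_def by simp
qed

definition Wt :: "nat \<Rightarrow> (nat set \<Rightarrow> real) \<Rightarrow> nat set \<Rightarrow> real" where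
  "Wt n p X = (\<Sum>B\<in>{B\<in>bases n p. X \<subseteq> B}. p B)"

definition bm :: "nat \<Rightarrow> (nat set \<Rightarrow> real) \<Rightarrow> nat set \<Rightarrow> nat \<Rightarrow> real" where
  "bm n p s e = (if e \<notin> s then Wt n p (insert e s) else 0)"

definition Qm :: "nat \<Rightarrow> (nat set \<Rightarrow> real) \<Rightarrow> nat set \<Rightarrow> nat \<Rightarrow> nat \<Rightarrow> real" where
  "Qm n p s e f = (if e \<noteq> f \<and> e \<notin> s \<and> f \<notin> s then Wt n p (insert e (insert f s)) else 0)"

lemma PF_one: "PF G c T (\<lambda>_. 1) = (\<Sum>S\<in>G. c S)"
  unfolding PF_def by simp

lemma finite_bases: "finite (bases n p)"
  unfolding bases_def by (rule finite_subset[of _ "Pow {..<n}"]) auto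

lemma sum_Pow_bases:
  "(\<Sum>S\<in>{S\<in>Pow {..<n}. P S}. p S) = (\<Sum>B\<in>{B\<in>bases n p. P B}. p B)"
  by (rule sum.mono_neutral_cong_right) (auto simp: bases_def)

lemma LC_from_slc:
  assumes nn: "\<And>S. p S \<ge> 0"
    and slc: "strongly_log_concave_poly n (gen_poly n p)"
    and s: "s \<subseteq> {..<n}" and Wpos: "Wt n p s > 0"
  shows "Wt n p s * (\<Sum>e<n. \<Sum>f<n. v e * v f * Qm n p s e f) \<le> (\<Sum>e<n. bm n p s e * v e)^2"
proof -
  have fs: "finite s" using s finite_subset by blast
  let ?F = "{S\<in>Pow {..<n}. s \<subseteq> S}"
  have fin: "finite ?F" "\<forall>S\<in>?F. finite S" by (auto intro: finite_subset)
  have q: "partial_set s (gen_poly n p) = PF ?F p s" by (rule partial_set_gen_poly[OF fs])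
  have q1: "PF ?F p s (\<lambda>_. 1) = Wt n p s"
    unfolding PF_one Wt_def by (rule sum_Pow_bases)
  have b: "PF {S\<in>?F. j\<in>S \<and> j\<notin>s} p (insert j s) (\<lambda>_. 1) = bm n p s j" for j
  proof -
    have "PF {S\<in>?F. j\<in>S \<and> j\<notin>s} p (insert j s) (\<lambda>_. 1) = (\<Sum>S\<in>{S\<in>Pow {..<n}. s \<subseteq> S \<and> j\<in>S \<and> j\<notin>s}. p S)"
      unfolding PF_one by (intro sum.cong) auto
    also have "\<dots> = (\<Sum>B\<in>{B\<in>bases n p. s \<subseteq> B \<and> j\<in>B \<and> j\<notin>s}. p B)" by (rule sum_Pow_bases)
    also have "\<dots> = bm n p s j"
      unfolding bm_def Wt_def by (cases "j \<in> s") (auto intro!: sum.cong)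
    finally show ?thesis .
  qed
  have Q: "PF {S\<in>{S\<in>?F. j\<in>S \<and> j\<notin>s}. i\<in>S \<and> i\<notin>insert j s} p (insert i (insert j s)) (\<lambda>_. 1) = Qm n p s i j" for i j
  proof -
    have "PF {S\<in>{S\<in>?F. j\<in>S \<and> j\<notin>s}. i\<in>S \<and> i\<notin>insert j s} p (insert i (insert j s)) (\<lambda>_. 1)
       = (\<Sum>S\<in>{S\<in>Pow {..<n}. s \<subseteq> S \<and> j\<in>S \<and> j\<notin>s \<and> i\<in>S \<and> i\<notin>insert j s}. p S)"
      unfolding PF_one by (intro sum.cong) auto
    also have "\<dots> = (\<Sum>B\<in>{B\<in>bases n p. s \<subseteq> B \<and> j\<in>B \<and> j\<notin>s \<and> i\<in>B \<and> i\<notin>insert j s}. p B)" by (rule sum_Pow_bases)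
    also have "\<dots> = Qm n p s i j"
      unfolding Qm_def Wt_def by (cases "i \<noteq> j \<and> i \<notin> s \<and> j \<notin> s") (auto intro!: sum.cong)
    finally show ?thesis .
  qed
  have H: "partial i (partial j (\<lambda>x. ln (partial_set s (gen_poly n p) x))) (\<lambda>_. 1)
      = (Qm n p s i j * Wt n p s - bm n p s j * bm n p s i) / (Wt n p s)^2" for i j
    unfolding q using hess_PF[OF fin nn, where T=s and i=i and j=j] q1 Wpos b Q by simp
  have "hessian_nsd n (\<lambda>x. ln (partial_set s (gen_poly n p) x)) (\<lambda>_. 1)"
    using slc s unfolding strongly_log_concave_poly_def by blast
  then have "(\<Sum>i<n. \<Sum>j<n. v i * ((Qm n p s i j * Wt n p s - bm n p s j * bm n p s i) / (Wt n p s)^2) * v j) \<le> 0"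
    unfolding hessian_nsd_def H by blast
  also have "(\<Sum>i<n. \<Sum>j<n. v i * ((Qm n p s i j * Wt n p s - bm n p s j * bm n p s i) / (Wt n p s)^2) * v j)
     = (Wt n p s * (\<Sum>e<n. \<Sum>f<n. v e * v f * Qm n p s e f) - (\<Sum>e<n. bm n p s e * v e)^2) / (Wt n p s)^2"
  proof -
    have "(\<Sum>e<n. bm n p s e * v e)^2 = (\<Sum>i<n. \<Sum>j<n. (bm n p s i * v i) * (bm n p s j * v j))"
      by (simp add: power2_eq_square sum_product)
    then show ?thesis
      by (simp add: sum_divide_distrib sum_distrib_left sum_subtractf[symmetric] diff_divide_distrib algebra_simps)
  qed
  finally show ?thesis using Wpos by (simp add: divide_le_0_iff)
qed

lemma gibbs:
  fixes a c :: "'a \<Rightarrow> real"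
  assumes "finite X" "X \<noteq> {}" "\<And>x. x \<in> X \<Longrightarrow> a x > 0" "\<And>x. x \<in> X \<Longrightarrow> c x > 0"
  shows "(\<Sum>x\<in>X. a x * ln (c x / a x)) \<le> (\<Sum>x\<in>X. a x) * ln ((\<Sum>x\<in>X. c x) / (\<Sum>x\<in>X. a x))"
proof -
  define SA where "SA = (\<Sum>x\<in>X. a x)"
  define SC where "SC = (\<Sum>x\<in>X. c x)"
  have SA: "SA > 0" unfolding SA_def using assms by (intro sum_pos) auto
  have SC: "SC > 0" unfolding SC_def using assms by (intro sum_pos) auto
  have "(\<Sum>x\<in>X. a x * ln (c x / a x)) - SA * ln (SC / SA) = (\<Sum>x\<in>X. a x * ln ((c x * SA) / (a x * SC)))"
  proof -
    have "a x * ln ((c x * SA) / (a x * SC)) = a x * ln (c x / a x) - a x * ln (SC / SA)" if "x \<in> X" for x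
    proof -
      have "(c x * SA) / (a x * SC) = (c x / a x) / (SC / SA)" using SA SC assms(3)[OF that] by (simp add: field_simps)
      then show ?thesis using SA SC assms(3,4)[OF that] by (simp add: ln_div ln_mult algebra_simps)
    qed
    then show ?thesis unfolding SA_def by (simp add: sum_subtractf sum_distrib_right)
  qed
  also have "\<dots> \<le> (\<Sum>x\<in>X. a x * ((c x * SA) / (a x * SC) - 1))"
  proof (rule sum_mono)
    fix x assume x: "x \<in> X"
    show "a x * ln ((c x * SA) / (a x * SC)) \<le> a x * ((c x * SA) / (a x * SC) - 1)"
      using assms(3,4)[OF x] SA SC by (intro mult_left_mono ln_le_minus_one) auto
  qed
  also have "\<dots> = (\<Sum>x\<in>X. c x * SA / SC - a x)"
  proof (rule sum.cong)
    fix x assume x: "x \<in> X"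
    show "a x * ((c x * SA) / (a x * SC) - 1) = c x * SA / SC - a x"
      using assms(3)[OF x] SC by (simp add: field_simps)
  qed simp
  also have "\<dots> = 0" unfolding SA_def SC_def using SC unfolding SC_def
    by (simp add: sum_subtractf sum_divide_distrib[symmetric] sum_distrib_right[symmetric])
  finally show ?thesis unfolding SA_def SC_def by simp
qed

lemma sum_R_to_NN:
  assumes "finite N" "R \<subseteq> N \<times> N" "\<And>e f. e \<in> N \<Longrightarrow> f \<in> N \<Longrightarrow> (e, f) \<notin> R \<Longrightarrow> F e f = 0"
  shows "(\<Sum>x\<in>R. F (fst x) (snd x)) = (\<Sum>e\<in>N. \<Sum>f\<in>N. F e f)"
proof -
  have "(\<Sum>x\<in>R. F (fst x) (snd x)) = (\<Sum>x\<in>N \<times> N. F (fst x) (snd x))"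
    using assms by (intro sum.mono_neutral_left) (auto intro: finite_cartesian_product)
  also have "\<dots> = (\<Sum>e\<in>N. \<Sum>f\<in>N. F e f)"
    by (simp add: sum.cartesian_product case_prod_beta)
  finally show ?thesis .
qed

lemma rcs_lemma:
  fixes Q :: "nat \<Rightarrow> nat \<Rightarrow> real" and bb z :: "nat \<Rightarrow> real"
  assumes finN: "finite N"
    and Qsym: "\<And>e f. Q e f = Q f e"
    and c: "c > 0"
    and LC: "\<And>v. c * (\<Sum>e\<in>N. \<Sum>f\<in>N. v e * v f * Q e f) \<le> (\<Sum>e\<in>N. bb e * v e)^2"
    and bb1: "(\<Sum>e\<in>N. bb e) \<noteq> 0"
    and A: "(\<Sum>e\<in>N. \<Sum>f\<in>N. Q e f) > 0"
  shows "(\<Sum>e\<in>N. \<Sum>f\<in>N. Q e f) * (\<Sum>e\<in>N. \<Sum>f\<in>N. z e * z f * Q e f) \<le> (\<Sum>e\<in>N. (\<Sum>f\<in>N. Q e f) * z e)^2"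
proof -
  define AA where "AA = (\<Sum>e\<in>N. \<Sum>f\<in>N. Q e f)"
  define s1 where "s1 = (\<Sum>e\<in>N. (\<Sum>f\<in>N. Q e f) * z e)"
  define zz where "zz = (\<Sum>e\<in>N. \<Sum>f\<in>N. z e * z f * Q e f)"
  define t where "t = (\<Sum>e\<in>N. bb e * z e) / (\<Sum>e\<in>N. bb e)"
  define v where "v = (\<lambda>e. z e - t)"
  have "(\<Sum>e\<in>N. bb e * v e) = (\<Sum>e\<in>N. bb e * z e) - t * (\<Sum>e\<in>N. bb e)"
    unfolding v_def by (simp add: algebra_simps sum_subtractf sum_distrib_left)
  also have "\<dots> = 0" unfolding t_def using bb1 by simp
  finally have bv: "(\<Sum>e\<in>N. bb e * v e) = 0" .
  have s1': "(\<Sum>e\<in>N. \<Sum>f\<in>N. z f * Q e f) = s1"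
  proof -
    have "(\<Sum>e\<in>N. \<Sum>f\<in>N. z f * Q e f) = (\<Sum>f\<in>N. \<Sum>e\<in>N. z f * Q e f)" by (rule sum.swap)
    also have "\<dots> = (\<Sum>f\<in>N. (\<Sum>e\<in>N. Q f e) * z f)"
      by (simp add: sum_distrib_left sum_distrib_right Qsym mult.commute)
    finally show ?thesis unfolding s1_def by simp
  qed
  have s1'': "(\<Sum>e\<in>N. \<Sum>f\<in>N. z e * Q e f) = s1"
    unfolding s1_def by (simp add: sum_distrib_left sum_distrib_right mult.commute)
  have "(\<Sum>e\<in>N. \<Sum>f\<in>N. v e * v f * Q e f)
      = (\<Sum>e\<in>N. \<Sum>f\<in>N. z e * z f * Q e f - t * (z e * Q e f) - t * (z f * Q e f) + t^2 * Q e f)"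
    unfolding v_def by (intro sum.cong refl) (simp add: algebra_simps power2_eq_square)
  also have "\<dots> = zz - t * (\<Sum>e\<in>N. \<Sum>f\<in>N. z e * Q e f) - t * (\<Sum>e\<in>N. \<Sum>f\<in>N. z f * Q e f) + t^2 * AA"
    unfolding zz_def AA_def
    by (simp only: sum.distrib sum_subtractf sum_distrib_left)
  also have "\<dots> = zz - t * s1 - t * s1 + t^2 * AA" using s1' s1'' by simp
  finally have vQv: "(\<Sum>e\<in>N. \<Sum>f\<in>N. v e * v f * Q e f) = zz - 2 * t * s1 + t^2 * AA" by simp
  have "c * (zz - 2 * t * s1 + t^2 * AA) \<le> 0" using LC[of v] vQv bv by simp
  then have le: "zz - 2 * t * s1 + t^2 * AA \<le> 0" using c by (simp add: mult_le_0_iff)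
  have AA: "AA > 0" using A unfolding AA_def .
  have "AA * zz \<le> AA * (2 * t * s1 - t^2 * AA)" using le AA by (intro mult_left_mono) auto
  also have "\<dots> \<le> s1^2"
  proof -
    have "0 \<le> (s1 - t * AA)^2" by simp
    then show ?thesis by (simp add: power2_eq_square algebra_simps)
  qed
  finally show ?thesis unfolding AA_def zz_def s1_def .
qed

lemma loc_ineq:
  fixes Q h :: "nat \<Rightarrow> nat \<Rightarrow> real" and bb :: "nat \<Rightarrow> real"
  assumes finN: "finite N"
    and Qnn: "\<And>e f. Q e f \<ge> 0" and Qsym: "\<And>e f. Q e f = Q f e"
    and hpos: "\<And>e f. e \<in> N \<Longrightarrow> f \<in> N \<Longrightarrow> Q e f > 0 \<Longrightarrow> h e f > 0"
    and hsym: "\<And>e f. h e f = h f e"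
    and c: "c > 0"
    and LC: "\<And>v. c * (\<Sum>e\<in>N. \<Sum>f\<in>N. v e * v f * Q e f) \<le> (\<Sum>e\<in>N. bb e * v e)^2"
    and bb1: "(\<Sum>e\<in>N. bb e) \<noteq> 0"
    and A: "(\<Sum>e\<in>N. \<Sum>f\<in>N. Q e f) > 0"
  shows "2 * (\<Sum>e\<in>N. (\<Sum>f\<in>N. Q e f * h e f) * ln ((\<Sum>f\<in>N. Q e f * h e f) / (\<Sum>f\<in>N. Q e f)))
     \<le> (\<Sum>e\<in>N. \<Sum>f\<in>N. Q e f * h e f * ln (h e f))
       + (\<Sum>e\<in>N. \<Sum>f\<in>N. Q e f * h e f) * ln ((\<Sum>e\<in>N. \<Sum>f\<in>N. Q e f * h e f) / (\<Sum>e\<in>N. \<Sum>f\<in>N. Q e f))"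
proof -
  define q where "q = (\<lambda>e. \<Sum>f\<in>N. Q e f * h e f)"
  define \<beta> where "\<beta> = (\<lambda>e. \<Sum>f\<in>N. Q e f)"
  define z where "z = (\<lambda>e. q e / \<beta> e)"
  define S where "S = (\<Sum>e\<in>N. \<Sum>f\<in>N. Q e f * h e f)"
  define AA where "AA = (\<Sum>e\<in>N. \<Sum>f\<in>N. Q e f)"
  define R where "R = {x \<in> N \<times> N. Q (fst x) (snd x) > 0}"
  have AA: "AA > 0" using A unfolding AA_def .
  have finR: "finite R" unfolding R_def using finN by (auto intro: finite_subset[of _ "N \<times> N"])
  have Qle\<beta>: "Q e f \<le> \<beta> e" if "e \<in> N" "f \<in> N" for e f
    unfolding \<beta>_def using finN that Qnn by (intro member_le_sum) auto
  have hnn: "Q e f * h e f \<ge> 0" if "e \<in> N" "f \<in> N" for e f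
    using Qnn[of e f] hpos[OF that] by (cases "Q e f > 0") (auto simp: less_le)
  have Qhle: "Q e f * h e f \<le> q e" if "e \<in> N" "f \<in> N" for e f
    unfolding q_def using finN that hnn by (intro member_le_sum) auto
  have zpos: "z e > 0" if "e \<in> N" "f \<in> N" "Q e f > 0" for e f
  proof -
    have "\<beta> e > 0" using Qle\<beta>[OF that(1,2)] that(3) by simp
    moreover have "q e > 0" using Qhle[OF that(1,2)] that(3) hpos[OF that] by (smt (verit) mult_pos_pos)
    ultimately show ?thesis unfolding z_def by simp
  qed
  have znn: "z e \<ge> 0" if "e \<in> N" for e
  proof -
    have "\<beta> e \<ge> 0" unfolding \<beta>_def using Qnn by (intro sum_nonneg) auto
    moreover have "q e \<ge> 0" unfolding q_def using hnn that by (intro sum_nonneg) auto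
    ultimately show ?thesis unfolding z_def by simp
  qed
  have \<beta>z: "\<beta> e * z e = q e" if "e \<in> N" for e
  proof (cases "\<beta> e = 0")
    case True
    then have "Q e f = 0" if "f \<in> N" for f using Qle\<beta>[OF \<open>e \<in> N\<close> that] Qnn[of e f] by simp
    then have "q e = 0" unfolding q_def by simp
    then show ?thesis using True by simp
  next
    case False then show ?thesis unfolding z_def by simp
  qed
  have Ssum: "S = (\<Sum>e\<in>N. q e)" unfolding S_def q_def ..
  have s1: "(\<Sum>e\<in>N. (\<Sum>f\<in>N. Q e f) * z e) = S"
    unfolding Ssum using \<beta>z unfolding \<beta>_def by (intro sum.cong) auto
  have rcs: "AA * (\<Sum>e\<in>N. \<Sum>f\<in>N. z e * z f * Q e f) \<le> S^2"
    using rcs_lemma[OF finN Qsym c LC bb1 A, of z] s1 unfolding AA_def by simp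
  obtain e0 f0 where e0: "e0 \<in> N" "f0 \<in> N" "Q e0 f0 > 0"
  proof -
    have "\<exists>e\<in>N. \<exists>f\<in>N. Q e f \<noteq> 0"
    proof (rule ccontr)
      assume "\<not> ?thesis" then have "AA = 0" unfolding AA_def by simp
      then show False using AA by simp
    qed
    then obtain e f where "e \<in> N" "f \<in> N" "Q e f \<noteq> 0" by blast
    then show ?thesis using that[of e f] Qnn[of e f] by simp
  qed
  have Rne: "R \<noteq> {}" using e0 unfolding R_def by auto
  have RNN: "R \<subseteq> N \<times> N" unfolding R_def by auto
  have outR: "Q e f = 0" if "e \<in> N" "f \<in> N" "(e, f) \<notin> R" for e f
    using that Qnn[of e f] unfolding R_def by auto
  have p1: "Q (fst x) (snd x) * h (fst x) (snd x) > 0"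
    if "x \<in> R" for x
  proof -
    from that have x: "fst x \<in> N" "snd x \<in> N" "Q (fst x) (snd x) > 0" unfolding R_def by auto
    show "Q (fst x) (snd x) * h (fst x) (snd x) > 0" using x hpos[OF x] by simp
  qed
  have p2: "Q (fst x) (snd x) * z (fst x) * z (snd x) > 0" if "x \<in> R" for x
  proof -
    from that have x: "fst x \<in> N" "snd x \<in> N" "Q (fst x) (snd x) > 0" unfolding R_def by auto
    have "Q (snd x) (fst x) > 0" using x(3) Qsym by simp
    then show ?thesis
      using x zpos[OF x] zpos[OF x(2,1)] by simp
  qed
  have gib: "(\<Sum>x\<in>R. (Q (fst x) (snd x) * h (fst x) (snd x)) * ln ((Q (fst x) (snd x) * z (fst x) * z (snd x)) / (Q (fst x) (snd x) * h (fst x) (snd x))))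
     \<le> (\<Sum>x\<in>R. Q (fst x) (snd x) * h (fst x) (snd x)) * ln ((\<Sum>x\<in>R. Q (fst x) (snd x) * z (fst x) * z (snd x)) / (\<Sum>x\<in>R. Q (fst x) (snd x) * h (fst x) (snd x)))"
    by (rule gibbs[OF finR Rne p1 p2])
  have RS: "(\<Sum>x\<in>R. Q (fst x) (snd x) * h (fst x) (snd x)) = S"
    unfolding S_def by (rule sum_R_to_NN[OF finN RNN]) (simp add: outR)
  have RZ: "(\<Sum>x\<in>R. Q (fst x) (snd x) * z (fst x) * z (snd x)) = (\<Sum>e\<in>N. \<Sum>f\<in>N. z e * z f * Q e f)"
    by (subst sum_R_to_NN[OF finN RNN]) (auto simp: outR mult.commute mult.left_commute)
  have Spos: "S > 0" unfolding RS[symmetric] by (rule sum_pos[OF finR Rne p1])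
  have ZZpos: "(\<Sum>e\<in>N. \<Sum>f\<in>N. z e * z f * Q e f) > 0" unfolding RZ[symmetric] by (rule sum_pos[OF finR Rne p2])
  have lnsplit: "(\<Sum>x\<in>R. (Q (fst x) (snd x) * h (fst x) (snd x)) * ln ((Q (fst x) (snd x) * z (fst x) * z (snd x)) / (Q (fst x) (snd x) * h (fst x) (snd x))))
     = (\<Sum>e\<in>N. \<Sum>f\<in>N. Q e f * h e f * (ln (z e) + ln (z f) - ln (h e f)))"
  proof -
    have "(\<Sum>x\<in>R. (Q (fst x) (snd x) * h (fst x) (snd x)) * ln ((Q (fst x) (snd x) * z (fst x) * z (snd x)) / (Q (fst x) (snd x) * h (fst x) (snd x))))
       = (\<Sum>x\<in>R. Q (fst x) (snd x) * h (fst x) (snd x) * (ln (z (fst x)) + ln (z (snd x)) - ln (h (fst x) (snd x))))"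
    proof (rule sum.cong[OF refl])
      fix x assume xR: "x \<in> R"
      then have x: "fst x \<in> N" "snd x \<in> N" "Q (fst x) (snd x) > 0" unfolding R_def by auto
      have "Q (snd x) (fst x) > 0" using x(3) Qsym by simp
      then have zz: "z (fst x) > 0" "z (snd x) > 0" using zpos[OF x] zpos[OF x(2,1)] by auto
      have hh: "h (fst x) (snd x) > 0" using hpos[OF x] .
      have "(Q (fst x) (snd x) * z (fst x) * z (snd x)) / (Q (fst x) (snd x) * h (fst x) (snd x))
          = z (fst x) * z (snd x) / h (fst x) (snd x)" using x(3) by simp
      then show "(Q (fst x) (snd x) * h (fst x) (snd x)) * ln ((Q (fst x) (snd x) * z (fst x) * z (snd x)) / (Q (fst x) (snd x) * h (fst x) (snd x)))
         = Q (fst x) (snd x) * h (fst x) (snd x) * (ln (z (fst x)) + ln (z (snd x)) - ln (h (fst x) (snd x)))"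
        using zz hh by (simp add: ln_div ln_mult)
    qed
    also have "\<dots> = (\<Sum>e\<in>N. \<Sum>f\<in>N. Q e f * h e f * (ln (z e) + ln (z f) - ln (h e f)))"
      by (rule sum_R_to_NN[OF finN RNN]) (simp add: outR)
    finally show ?thesis .
  qed
  have t1: "(\<Sum>e\<in>N. \<Sum>f\<in>N. Q e f * h e f * ln (z e)) = (\<Sum>e\<in>N. q e * ln (z e))"
    unfolding q_def by (simp add: sum_distrib_right)
  have t2: "(\<Sum>e\<in>N. \<Sum>f\<in>N. Q e f * h e f * ln (z f)) = (\<Sum>e\<in>N. q e * ln (z e))"
  proof -
    have "(\<Sum>e\<in>N. \<Sum>f\<in>N. Q e f * h e f * ln (z f)) = (\<Sum>f\<in>N. \<Sum>e\<in>N. Q e f * h e f * ln (z f))"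
      by (rule sum.swap)
    also have "\<dots> = (\<Sum>f\<in>N. \<Sum>e\<in>N. Q f e * h f e * ln (z f))"
      using Qsym hsym by simp
    finally show ?thesis unfolding q_def by (simp add: sum_distrib_right)
  qed
  have split3: "(\<Sum>e\<in>N. \<Sum>f\<in>N. Q e f * h e f * (ln (z e) + ln (z f) - ln (h e f)))
      = (\<Sum>e\<in>N. \<Sum>f\<in>N. Q e f * h e f * ln (z e)) + (\<Sum>e\<in>N. \<Sum>f\<in>N. Q e f * h e f * ln (z f))
        - (\<Sum>e\<in>N. \<Sum>f\<in>N. Q e f * h e f * ln (h e f))"
    by (simp add: algebra_simps sum.distrib sum_subtractf)
  have main: "2 * (\<Sum>e\<in>N. q e * ln (z e)) - (\<Sum>e\<in>N. \<Sum>f\<in>N. Q e f * h e f * ln (h e f))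
      \<le> S * ln ((\<Sum>e\<in>N. \<Sum>f\<in>N. z e * z f * Q e f) / S)"
    using gib lnsplit split3 t1 t2 RS RZ by simp
  have "ln ((\<Sum>e\<in>N. \<Sum>f\<in>N. z e * z f * Q e f) / S) \<le> ln (S / AA)"
  proof (subst ln_le_cancel_iff)
    show "0 < (\<Sum>e\<in>N. \<Sum>f\<in>N. z e * z f * Q e f) / S" using ZZpos Spos by simp
    show "0 < S / AA" using Spos AA by simp
    show "(\<Sum>e\<in>N. \<Sum>f\<in>N. z e * z f * Q e f) / S \<le> S / AA"
      using rcs Spos AA by (simp add: field_simps power2_eq_square mult.commute)
  qed
  then have "S * ln ((\<Sum>e\<in>N. \<Sum>f\<in>N. z e * z f * Q e f) / S) \<le> S * ln (S / AA)"
    using Spos by (intro mult_left_mono) auto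
  with main have "2 * (\<Sum>e\<in>N. q e * ln (z e)) \<le> (\<Sum>e\<in>N. \<Sum>f\<in>N. Q e f * h e f * ln (h e f)) + S * ln (S / AA)"
    by simp
  then show ?thesis unfolding q_def z_def \<beta>_def S_def AA_def .
qed

locale wc =
  fixes n r :: nat and p :: "nat set \<Rightarrow> real"
  assumes nn: "\<And>S. p S \<ge> 0"
    and supp: "\<And>S. p S \<noteq> 0 \<Longrightarrow> S \<subseteq> {..<n} \<and> card S = r"
    and ne: "bases n p \<noteq> {}"
    and LC: "\<And>s v. s \<subseteq> {..<n} \<Longrightarrow> Wt n p s > 0 \<Longrightarrow>
       Wt n p s * (\<Sum>e<n. \<Sum>f<n. v e * v f * Qm n p s e f) \<le> (\<Sum>e<n. bm n p s e * v e)^2"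
begin

abbreviation W where "W \<equiv> Wt n p"

definition L :: "nat \<Rightarrow> nat set set" where "L m = {I. I \<subseteq> {..<n} \<and> card I = m}"

lemma finite_L[simp]: "finite (L m)"
  unfolding L_def by (rule finite_subset[of _ "Pow {..<n}"]) auto

lemma L_finite_mem: "I \<in> L m \<Longrightarrow> finite I"
  unfolding L_def using finite_subset by blast

lemma bases_prop: assumes "B \<in> bases n p" shows "p B > 0" "B \<subseteq> {..<n}" "card B = r" "finite B"
proof -
  have "p B \<noteq> 0" using assms unfolding bases_def by auto
  then show "p B > 0" using nn[of B] by simp
  show "B \<subseteq> {..<n}" "card B = r" using supp \<open>p B \<noteq> 0\<close> by auto
  then show "finite B" using finite_subset by blast
qed

lemma W_alt: "W X = (\<Sum>B\<in>bases n p. if X \<subseteq> B then p B else 0)"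
  unfolding Wt_def using finite_bases by (simp add: sum.inter_filter)

lemma W_nn: "W X \<ge> 0"
  unfolding Wt_def using nn by (intro sum_nonneg) auto

lemma W_pos_iff: "W X > 0 \<longleftrightarrow> (\<exists>B\<in>bases n p. X \<subseteq> B)"
proof
  assume "W X > 0"
  then have "{B\<in>bases n p. X \<subseteq> B} \<noteq> {}" unfolding Wt_def by (metis less_irrefl sum.empty)
  then show "\<exists>B\<in>bases n p. X \<subseteq> B" by auto
next
  assume "\<exists>B\<in>bases n p. X \<subseteq> B"
  then obtain B where B: "B \<in> bases n p" "X \<subseteq> B" by auto
  have "p B \<le> W X" unfolding Wt_def using B finite_bases nn
    by (intro member_le_sum) auto
  then show "W X > 0" using bases_prop(1)[OF B(1)] by simp
qed

lemma W_mono: "X \<subseteq> Y \<Longrightarrow> W Y \<le> W X"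
  unfolding Wt_def using finite_bases nn by (intro sum_mono2) auto

lemma W_zero_sup: "W X = 0 \<Longrightarrow> X \<subseteq> Y \<Longrightarrow> W Y = 0"
  using W_mono[of X Y] W_nn[of Y] by simp

lemma indep_iff: "I \<in> indep_k n p m \<longleftrightarrow> I \<in> L m \<and> W I > 0"
  unfolding indep_k_def L_def W_pos_iff using bases_prop(2) by blast

lemma K1:
  assumes X: "X \<subseteq> {..<n}"
  shows "(\<Sum>e\<in>{..<n} - X. W (insert e X)) = real (r - card X) * W X"
proof -
  have fX: "finite X" using X finite_subset by blast
  have "(\<Sum>e\<in>{..<n} - X. W (insert e X)) = (\<Sum>e\<in>{..<n} - X. \<Sum>B\<in>bases n p. if insert e X \<subseteq> B then p B else 0)"
    by (simp add: W_alt)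
  also have "\<dots> = (\<Sum>B\<in>bases n p. \<Sum>e\<in>{..<n} - X. if insert e X \<subseteq> B then p B else 0)"
    by (rule sum.swap)
  also have "\<dots> = (\<Sum>B\<in>bases n p. if X \<subseteq> B then real (r - card X) * p B else 0)"
  proof (rule sum.cong[OF refl])
    fix B assume B: "B \<in> bases n p"
    have "(\<Sum>e\<in>{..<n} - X. if insert e X \<subseteq> B then p B else 0) = (\<Sum>e\<in>{e\<in>{..<n} - X. insert e X \<subseteq> B}. p B)"
      using sum.inter_filter[of "{..<n} - X" "\<lambda>_. p B" "\<lambda>e. insert e X \<subseteq> B"] by simp
    also have "\<dots> = real (card {e\<in>{..<n} - X. insert e X \<subseteq> B}) * p B" by simp
    also have "\<dots> = (if X \<subseteq> B then real (r - card X) * p B else 0)"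
    proof (cases "X \<subseteq> B")
      case True
      have "{e\<in>{..<n} - X. insert e X \<subseteq> B} = B - X" using True bases_prop(2)[OF B] by auto
      moreover have "card (B - X) = r - card X" using True bases_prop(3,4)[OF B] fX
        by (simp add: card_Diff_subset)
      ultimately show ?thesis using True by simp
    next
      case False
      then have "{e\<in>{..<n} - X. insert e X \<subseteq> B} = {}" by auto
      then show ?thesis using False by simp
    qed
    finally show "(\<Sum>e\<in>{..<n} - X. if insert e X \<subseteq> B then p B else 0) = (if X \<subseteq> B then real (r - card X) * p B else 0)" .
  qed
  also have "\<dots> = real (r - card X) * W X"
    by (simp add: W_alt sum_distrib_left if_distrib cong: if_cong)
  finally show ?thesis .
qed

lemma K2:
  "(\<Sum>I\<in>L m. \<Sum>e\<in>{..<n} - I. F I e) = (\<Sum>K\<in>L (Suc m). \<Sum>e\<in>K. F (K - {e}) e)"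
proof -
  have "(\<Sum>I\<in>L m. \<Sum>e\<in>{..<n} - I. F I e) = (\<Sum>x\<in>Sigma (L m) (\<lambda>I. {..<n} - I). F (fst x) (snd x))"
    by (simp add: sum.Sigma case_prod_beta)
  also have "\<dots> = (\<Sum>x\<in>Sigma (L (Suc m)) (\<lambda>K. K). F (fst x - {snd x}) (snd x))"
  proof (rule sum.reindex_bij_witness[where i="\<lambda>x. (fst x - {snd x}, snd x)" and j="\<lambda>x. (insert (snd x) (fst x), snd x)"])
    fix a assume a: "a \<in> Sigma (L m) (\<lambda>I. {..<n} - I)"
    then show "(fst (insert (snd a) (fst a), snd a) - {snd (insert (snd a) (fst a), snd a)}, snd (insert (snd a) (fst a), snd a)) = a"
      by (cases a) auto
    have "finite (fst a)" using a L_finite_mem by (cases a) auto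
    then show "(insert (snd a) (fst a), snd a) \<in> Sigma (L (Suc m)) (\<lambda>K. K)"
      using a unfolding L_def by (cases a) auto
    show "F (fst (insert (snd a) (fst a), snd a) - {snd (insert (snd a) (fst a), snd a)}) (snd (insert (snd a) (fst a), snd a)) = F (fst a) (snd a)"
      using a by (cases a) auto
  next
    fix b assume b: "b \<in> Sigma (L (Suc m)) (\<lambda>K. K)"
    then show "(insert (snd (fst b - {snd b}, snd b)) (fst (fst b - {snd b}, snd b)), snd (fst b - {snd b}, snd b)) = b"
      by (cases b) auto
    have "finite (fst b)" using b L_finite_mem by (cases b) auto
    then show "(fst b - {snd b}, snd b) \<in> Sigma (L m) (\<lambda>I. {..<n} - I)"
      using b unfolding L_def by (cases b) auto
  qed
  also have "\<dots> = (\<Sum>K\<in>L (Suc m). \<Sum>e\<in>K. F (K - {e}) e)"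
    using sum.Sigma[of "L (Suc m)" "\<lambda>K. K" "\<lambda>K e. F (K - {e}) e"] L_finite_mem by (simp add: case_prod_beta)
  finally show ?thesis .
qed

end

definition psi :: "real \<Rightarrow> real" where "psi x = x * ln x"

lemma psi_tangent:
  assumes "x > 0" "y \<ge> 0"
  shows "psi y \<ge> psi x + (ln x + 1) * (y - x)"
proof (cases "y = 0")
  case True
  then show ?thesis using assms by (simp add: psi_def algebra_simps)
next
  case False
  then have y: "y > 0" using assms by simp
  have "ln (x / y) \<le> x / y - 1" using assms y by (intro ln_le_minus_one) auto
  then have "y * ln (x / y) \<le> y * (x / y - 1)" using y by (intro mult_left_mono) auto
  moreover have "y * (x / y - 1) = x - y" using y by (simp add: field_simps)
  moreover have "ln (x / y) = ln x - ln y" using assms y by (simp add: ln_div)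
  ultimately have "y * (ln x - ln y) \<le> x - y" by simp
  then show ?thesis unfolding psi_def by (simp add: algebra_simps)
qed

lemma jensen_psi:
  fixes a f :: "'a \<Rightarrow> real"
  assumes "finite X" "\<And>x. x \<in> X \<Longrightarrow> a x \<ge> 0" "(\<Sum>x\<in>X. a x) = 1" "\<And>x. x \<in> X \<Longrightarrow> f x \<ge> 0"
    and m: "(\<Sum>x\<in>X. a x * f x) > 0"
  shows "psi (\<Sum>x\<in>X. a x * f x) \<le> (\<Sum>x\<in>X. a x * psi (f x))"
proof -
  define M where "M = (\<Sum>x\<in>X. a x * f x)"
  have "(\<Sum>x\<in>X. a x * (psi M + (ln M + 1) * (f x - M))) \<le> (\<Sum>x\<in>X. a x * psi (f x))"
    using assms m unfolding M_def by (intro sum_mono mult_left_mono psi_tangent) auto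
  moreover have "(\<Sum>x\<in>X. a x * (psi M + (ln M + 1) * (f x - M))) = psi M * (\<Sum>x\<in>X. a x) + (ln M + 1) * ((\<Sum>x\<in>X. a x * f x) - M * (\<Sum>x\<in>X. a x))"
    by (simp add: algebra_simps sum.distrib sum_distrib_left sum_subtractf)
  ultimately show ?thesis using assms(3) unfolding M_def by simp
qed

context wc begin

definition Z :: "nat \<Rightarrow> real" where "Z m = (\<Sum>I\<in>L m. W I)"
definition mu :: "nat \<Rightarrow> nat set \<Rightarrow> real" where "mu m I = W I / Z m"
definition Ent :: "nat \<Rightarrow> (nat set \<Rightarrow> real) \<Rightarrow> real" where
  "Ent m g = (\<Sum>I\<in>L m. mu m I * psi (g I)) - psi (\<Sum>I\<in>L m. mu m I * g I)"
definition Dn :: "nat \<Rightarrow> (nat set \<Rightarrow> real) \<Rightarrow> nat set \<Rightarrow> real" where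
  "Dn m g I = (\<Sum>e\<in>{..<n} - I. W (insert e I) * g (insert e I)) / (real (r - m) * W I)"
definition Up :: "nat \<Rightarrow> (nat set \<Rightarrow> real) \<Rightarrow> nat set \<Rightarrow> real" where
  "Up m f K = (\<Sum>e\<in>K. f (K - {e})) / real (Suc m)"
definition pos :: "nat \<Rightarrow> (nat set \<Rightarrow> real) \<Rightarrow> bool" where
  "pos m g \<longleftrightarrow> (\<forall>I\<in>L m. W I > 0 \<longrightarrow> g I > 0)"

lemma L_sub: "I \<in> L m \<Longrightarrow> I \<subseteq> {..<n}" unfolding L_def by auto
lemma L_card: "I \<in> L m \<Longrightarrow> card I = m" unfolding L_def by auto

lemma W_pos_card: assumes "W I > 0" "finite I" shows "card I \<le> r"
proof -
  obtain B where "B \<in> bases n p" "I \<subseteq> B" using assms W_pos_iff by auto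
  then show ?thesis using bases_prop[of B] card_mono by metis
qed

lemma Z_pos: assumes "m \<le> r" shows "Z m > 0"
proof -
  obtain B where B: "B \<in> bases n p" using ne by auto
  obtain I where I: "I \<subseteq> B" "card I = m" "finite I"
    using obtain_subset_with_card_n[of m B] bases_prop(3)[OF B] assms by auto
  have IL: "I \<in> L m" unfolding L_def using I bases_prop(2)[OF B] by auto
  have WI: "W I > 0" using W_pos_iff B I by auto
  have "W I \<le> Z m" unfolding Z_def using IL W_nn by (intro member_le_sum) auto
  then show ?thesis using WI by simp
qed

lemma sum_mu: assumes "m \<le> r" shows "(\<Sum>I\<in>L m. mu m I) = 1"
  using Z_pos[OF assms] unfolding mu_def Z_def by (simp add: sum_divide_distrib[symmetric])

lemma mu_nn: "mu m I \<ge> 0"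
  unfolding mu_def Z_def using W_nn by (simp add: sum_nonneg)

lemma sumW_Dn:
  assumes I: "I \<in> L m"
  shows "(\<Sum>e\<in>{..<n} - I. W (insert e I) * g (insert e I)) = real (r - m) * W I * Dn m g I"
proof (cases "real (r - m) * W I = 0")
  case True
  have k1: "(\<Sum>e\<in>{..<n} - I. W (insert e I)) = 0" using K1[OF L_sub[OF I]] True L_card[OF I] by simp
  have "W (insert e I) = 0" if "e \<in> {..<n} - I" for e
    using k1 W_nn that by (subst (asm) sum_nonneg_eq_0_iff) auto
  then have "(\<Sum>e\<in>{..<n} - I. W (insert e I) * g (insert e I)) = 0" by simp
  then show ?thesis using True by simp
next
  case False
  then show ?thesis unfolding Dn_def by simp
qed

lemma Z_rec: "real (Suc m) * Z (Suc m) = real (r - m) * Z m"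
proof -
  have "(\<Sum>I\<in>L m. \<Sum>e\<in>{..<n} - I. W (insert e I)) = (\<Sum>K\<in>L (Suc m). \<Sum>e\<in>K. W (insert e (K - {e})))"
    by (rule K2)
  also have "\<dots> = (\<Sum>K\<in>L (Suc m). real (Suc m) * W K)"
  proof (rule sum.cong[OF refl])
    fix K assume K: "K \<in> L (Suc m)"
    have "(\<Sum>e\<in>K. W (insert e (K - {e}))) = (\<Sum>e\<in>K. W K)" by (intro sum.cong) (auto simp: insert_absorb)
    then show "(\<Sum>e\<in>K. W (insert e (K - {e}))) = real (Suc m) * W K" using L_card[OF K] by simp
  qed
  moreover have "(\<Sum>I\<in>L m. \<Sum>e\<in>{..<n} - I. W (insert e I)) = (\<Sum>I\<in>L m. real (r - m) * W I)"
  proof (rule sum.cong[OF refl])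
    fix I assume I: "I \<in> L m"
    show "(\<Sum>e\<in>{..<n} - I. W (insert e I)) = real (r - m) * W I" using K1[OF L_sub[OF I]] L_card[OF I] by simp
  qed
  ultimately have "(\<Sum>K\<in>L (Suc m). real (Suc m) * W K) = (\<Sum>I\<in>L m. real (r - m) * W I)"
    by simp
  then show ?thesis unfolding Z_def by (simp add: sum_distrib_left)
qed

lemma adj:
  "(\<Sum>K\<in>L (Suc m). W K * g K * Up m f K) = real (r - m) / real (Suc m) * (\<Sum>I\<in>L m. W I * Dn m g I * f I)"
proof -
  have "(\<Sum>I\<in>L m. \<Sum>e\<in>{..<n} - I. W (insert e I) * g (insert e I) * f I / real (Suc m))
      = (\<Sum>K\<in>L (Suc m). \<Sum>e\<in>K. W (insert e (K - {e})) * g (insert e (K - {e})) * f (K - {e}) / real (Suc m))"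
    by (rule K2)
  also have "\<dots> = (\<Sum>K\<in>L (Suc m). W K * g K * Up m f K)"
  proof (rule sum.cong[OF refl])
    fix K assume K: "K \<in> L (Suc m)"
    have "(\<Sum>e\<in>K. W (insert e (K - {e})) * g (insert e (K - {e})) * f (K - {e}) / real (Suc m))
        = (\<Sum>e\<in>K. W K * g K * f (K - {e}) / real (Suc m))" by (intro sum.cong) (auto simp: insert_absorb)
    then show "(\<Sum>e\<in>K. W (insert e (K - {e})) * g (insert e (K - {e})) * f (K - {e}) / real (Suc m)) = W K * g K * Up m f K"
      unfolding Up_def by (simp add: sum_distrib_left sum_divide_distrib)
  qed
  finally have "(\<Sum>K\<in>L (Suc m). W K * g K * Up m f K) = (\<Sum>I\<in>L m. (\<Sum>e\<in>{..<n} - I. W (insert e I) * g (insert e I)) * f I / real (Suc m))"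
    by (simp add: sum_distrib_right sum_divide_distrib)
  also have "\<dots> = (\<Sum>I\<in>L m. real (r - m) * W I * Dn m g I * f I / real (Suc m))"
    by (intro sum.cong refl) (simp add: sumW_Dn)
  also have "\<dots> = (\<Sum>I\<in>L m. real (r - m) / real (Suc m) * (W I * Dn m g I * f I))"
    by (intro sum.cong refl) simp
  finally show ?thesis by (simp add: sum_distrib_left)
qed

lemma adj_mu:
  assumes "m < r"
  shows "(\<Sum>K\<in>L (Suc m). mu (Suc m) K * g K * Up m f K) = (\<Sum>I\<in>L m. mu m I * Dn m g I * f I)"
proof -
  have Z0: "Z m > 0" "Z (Suc m) > 0" using Z_pos assms by auto
  have "(\<Sum>K\<in>L (Suc m). mu (Suc m) K * g K * Up m f K) = (\<Sum>K\<in>L (Suc m). W K * g K * Up m f K) / Z (Suc m)"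
    unfolding mu_def by (simp add: sum_divide_distrib)
  also have "\<dots> = real (r - m) / real (Suc m) * (\<Sum>I\<in>L m. W I * Dn m g I * f I) / Z (Suc m)"
    by (simp add: adj)
  also have "\<dots> = (\<Sum>I\<in>L m. W I * Dn m g I * f I) / Z m"
  proof -
    have h: "real (Suc m) * Z (Suc m) = real (r - m) * Z m" by (rule Z_rec)
    have rm: "real (r - m) > 0" using assms by simp
    have "real (r - m) / real (Suc m) / Z (Suc m) = real (r - m) / (real (Suc m) * Z (Suc m))" by simp
    also have "\<dots> = real (r - m) / (real (r - m) * Z m)" by (simp only: h)
    also have "\<dots> = 1 / Z m" using rm by simp
    finally have "real (r - m) / real (Suc m) / Z (Suc m) = 1 / Z m" .
    then have "(\<Sum>I\<in>L m. W I * Dn m g I * f I) * (real (r - m) / real (Suc m) / Z (Suc m)) = (\<Sum>I\<in>L m. W I * Dn m g I * f I) * (1 / Z m)"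
      by simp
    then show ?thesis by (simp add: mult.commute)
  qed
  also have "\<dots> = (\<Sum>I\<in>L m. mu m I * Dn m g I * f I)"
    unfolding mu_def by (simp add: sum_divide_distrib)
  finally show ?thesis .
qed

end

context wc begin

definition LP :: "nat \<Rightarrow> nat set set" where "LP m = {I\<in>L m. W I > 0}"

lemma finite_LP[simp]: "finite (LP m)" unfolding LP_def by simp

lemma sum_mu_LP: "(\<Sum>I\<in>L m. mu m I * F I) = (\<Sum>I\<in>LP m. mu m I * F I)"
proof (rule sum.mono_neutral_right)
  show "\<forall>I\<in>L m - LP m. mu m I * F I = 0"
    unfolding LP_def mu_def using W_nn by (auto simp: less_le)
qed (auto simp: LP_def)

lemma LP_ne: "m \<le> r \<Longrightarrow> LP m \<noteq> {}"
proof
  assume m: "m \<le> r" and e: "LP m = {}"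
  have "Z m = (\<Sum>I\<in>L m. W I)" unfolding Z_def ..
  also have "\<dots> = 0" using e W_nn unfolding LP_def by (intro sum.neutral) (auto simp: less_le)
  finally show False using Z_pos[OF m] by simp
qed

lemma mu_pos: "I \<in> LP m \<Longrightarrow> m \<le> r \<Longrightarrow> mu m I > 0"
  unfolding mu_def LP_def using Z_pos by auto

lemma Dn_const: assumes "I \<in> L m" "W I > 0" "m < r" shows "Dn m (\<lambda>_. c) I = c"
proof -
  have "(\<Sum>e\<in>{..<n} - I. W (insert e I) * c) = c * (real (r - m) * W I)"
    using K1[OF L_sub[OF assms(1)]] L_card[OF assms(1)] by (simp add: sum_distrib_left[symmetric] mult.commute)
  then show ?thesis unfolding Dn_def using assms by simp
qed

lemma Up_const: assumes "K \<in> L (Suc m)" shows "Up m (\<lambda>_. c) K = c"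
  unfolding Up_def using L_card[OF assms] by simp

lemma mean_Dn: assumes "m < r"
  shows "(\<Sum>K\<in>L (Suc m). mu (Suc m) K * g K) = (\<Sum>I\<in>L m. mu m I * Dn m g I)"
proof -
  have "(\<Sum>K\<in>L (Suc m). mu (Suc m) K * g K) = (\<Sum>K\<in>L (Suc m). mu (Suc m) K * g K * Up m (\<lambda>_. 1) K)"
    by (intro sum.cong) (auto simp: Up_const)
  also have "\<dots> = (\<Sum>I\<in>L m. mu m I * Dn m g I * 1)" by (rule adj_mu[OF assms])
  finally show ?thesis by simp
qed

lemma mean_Up: assumes "m < r"
  shows "(\<Sum>K\<in>L (Suc m). mu (Suc m) K * Up m f K) = (\<Sum>I\<in>L m. mu m I * f I)"
proof -
  have "(\<Sum>K\<in>L (Suc m). mu (Suc m) K * Up m f K) = (\<Sum>K\<in>L (Suc m). mu (Suc m) K * 1 * Up m f K)"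
    by simp
  also have "\<dots> = (\<Sum>I\<in>L m. mu m I * Dn m (\<lambda>_. 1) I * f I)" by (rule adj_mu[OF assms])
  also have "\<dots> = (\<Sum>I\<in>L m. mu m I * f I)"
  proof (rule sum.cong[OF refl])
    fix I assume I: "I \<in> L m"
    show "mu m I * Dn m (\<lambda>_. 1) I * f I = mu m I * f I"
    proof (cases "W I > 0")
      case True then show ?thesis using Dn_const[OF I True assms] by simp
    next
      case False then have "W I = 0" using W_nn[of I] by simp
      then show ?thesis unfolding mu_def by simp
    qed
  qed
  finally show ?thesis .
qed

lemma ext_base_elem:
  assumes "I \<in> L m" "W I > 0" "m < r"
  obtains e where "e \<in> {..<n} - I" "W (insert e I) > 0" "insert e I \<in> L (Suc m)"
proof -
  obtain B where B: "B \<in> bases n p" "I \<subseteq> B" using assms(2) W_pos_iff by auto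
  have fI: "finite I" using L_finite_mem[OF assms(1)] .
  have "card I < card B" using B bases_prop(3)[OF B(1)] L_card[OF assms(1)] assms(3) by simp
  then have "B - I \<noteq> {}" using B(2) by auto
  then obtain e where e: "e \<in> B" "e \<notin> I" by auto
  have "e \<in> {..<n} - I" using e bases_prop(2)[OF B(1)] by auto
  moreover have "W (insert e I) > 0" using W_pos_iff B e by auto
  moreover have "insert e I \<in> L (Suc m)" using e fI assms(1) bases_prop(2)[OF B(1)] B unfolding L_def by auto
  ultimately show ?thesis using that by blast
qed

lemma Dn_pos: assumes "m < r" "pos (Suc m) g" shows "pos m (Dn m g)"
  unfolding pos_def
proof (intro ballI impI)
  fix I assume I: "I \<in> L m" and WI: "W I > 0"
  obtain e0 where e0: "e0 \<in> {..<n} - I" "W (insert e0 I) > 0" "insert e0 I \<in> L (Suc m)"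
    using ext_base_elem[OF I WI assms(1)] .
  have nnt: "W (insert e I) * g (insert e I) \<ge> 0" if "e \<in> {..<n} - I" for e
  proof (cases "W (insert e I) > 0")
    case True
    have "insert e I \<in> L (Suc m)" using that I L_finite_mem[OF I] unfolding L_def by auto
    then show ?thesis using True assms(2) unfolding pos_def by auto
  next
    case False then show ?thesis using W_nn[of "insert e I"] by simp
  qed
  have "W (insert e0 I) * g (insert e0 I) > 0" using e0 assms(2) unfolding pos_def by auto
  then have "(\<Sum>e\<in>{..<n} - I. W (insert e I) * g (insert e I)) > 0"
    using e0(1) nnt by (intro sum_pos2[of _ e0]) auto
  then show "Dn m g I > 0" unfolding Dn_def using WI assms(1) by simp
qed

lemma Up_pos: assumes "pos m f" shows "pos (Suc m) (Up m f)"
  unfolding pos_def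
proof (intro ballI impI)
  fix K assume K: "K \<in> L (Suc m)" and WK: "W K > 0"
  have fK: "finite K" using L_finite_mem[OF K] .
  have ne: "K \<noteq> {}" using L_card[OF K] by auto
  have "f (K - {e}) > 0" if "e \<in> K" for e
  proof -
    have "K - {e} \<in> L m" using K that fK unfolding L_def by auto
    moreover have "W (K - {e}) > 0" using W_mono[of "K - {e}" K] WK by auto
    ultimately show ?thesis using assms unfolding pos_def by auto
  qed
  then have "(\<Sum>e\<in>K. f (K - {e})) > 0" using fK ne by (intro sum_pos) auto
  then show "Up m f K > 0" unfolding Up_def by simp
qed

lemma Ent_alt: "Ent m g = (\<Sum>I\<in>LP m. mu m I * psi (g I)) - psi (\<Sum>I\<in>LP m. mu m I * g I)"
  unfolding Ent_def by (simp add: sum_mu_LP)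

lemma sum_mu_LP1: "m \<le> r \<Longrightarrow> (\<Sum>I\<in>LP m. mu m I) = 1"
  using sum_mu[of m] sum_mu_LP[of m "\<lambda>_. 1"] by simp

lemma mean_pos: assumes "m \<le> r" "pos m g" shows "(\<Sum>I\<in>LP m. mu m I * g I) > 0"
  using assms LP_ne[OF assms(1)] mu_pos unfolding pos_def LP_def
  by (intro sum_pos) (auto simp: LP_def)

lemma Ent_nn: assumes "m \<le> r" "pos m g" shows "Ent m g \<ge> 0"
proof -
  have "psi (\<Sum>I\<in>LP m. mu m I * g I) \<le> (\<Sum>I\<in>LP m. mu m I * psi (g I))"
    using assms mean_pos[OF assms] sum_mu_LP1[OF assms(1)] mu_nn
    by (intro jensen_psi) (auto simp: pos_def LP_def less_imp_le)
  then show ?thesis unfolding Ent_alt by simp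
qed

lemma Ent_Up: assumes "m < r" "pos m f" shows "Ent (Suc m) (Up m f) \<le> Ent m f"
proof -
  have "(\<Sum>K\<in>L (Suc m). mu (Suc m) K * psi (Up m f K)) \<le> (\<Sum>K\<in>L (Suc m). mu (Suc m) K * Up m (\<lambda>I. psi (f I)) K)"
  proof (rule sum_mono)
    fix K assume K: "K \<in> L (Suc m)"
    show "mu (Suc m) K * psi (Up m f K) \<le> mu (Suc m) K * Up m (\<lambda>I. psi (f I)) K"
    proof (cases "W K > 0")
      case False then have "W K = 0" using W_nn[of K] by simp
      then show ?thesis unfolding mu_def by simp
    next
      case WK: True
      have fK: "finite K" using L_finite_mem[OF K] .
      have ne: "K \<noteq> {}" using L_card[OF K] by auto
      have fp: "f (K - {e}) > 0" if "e \<in> K" for e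
      proof -
        have "K - {e} \<in> L m" using K that fK unfolding L_def by auto
        moreover have "W (K - {e}) > 0" using W_mono[of "K - {e}" K] WK by auto
        ultimately show ?thesis using assms unfolding pos_def by auto
      qed
      have "psi (\<Sum>e\<in>K. (1 / real (Suc m)) * f (K - {e})) \<le> (\<Sum>e\<in>K. (1 / real (Suc m)) * psi (f (K - {e})))"
      proof (rule jensen_psi[OF fK])
        show "(\<Sum>e\<in>K. 1 / real (Suc m)) = 1" using L_card[OF K] by simp
        show "(\<Sum>e\<in>K. 1 / real (Suc m) * f (K - {e})) > 0" using fp fK ne by (intro sum_pos) auto
      qed (use fp in \<open>auto simp: less_imp_le\<close>)
      then have "psi (Up m f K) \<le> Up m (\<lambda>I. psi (f I)) K"
        unfolding Up_def by (simp add: sum_divide_distrib[symmetric] sum_distrib_left[symmetric])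
      then show ?thesis using mu_nn by (intro mult_left_mono) auto
    qed
  qed
  also have "\<dots> = (\<Sum>I\<in>L m. mu m I * psi (f I))" by (rule mean_Up[OF assms(1)])
  finally show ?thesis unfolding Ent_def mean_Up[OF assms(1)] by simp
qed

end

lemma sum_if_notin: "finite A \<Longrightarrow> (\<Sum>x\<in>A. if x \<notin> B then F x else 0) = (\<Sum>x\<in>A - B. F x)"
proof -
  assume "finite A"
  then have "(\<Sum>x\<in>A. if x \<notin> B then F x else 0) = (\<Sum>x\<in>{x\<in>A. x \<notin> B}. F x)"
    by (simp add: sum.inter_filter)
  also have "{x\<in>A. x \<notin> B} = A - B" by auto
  finally show ?thesis .
qed

context wc begin

lemma Qm_row:
  assumes "e \<notin> s"
  shows "(\<Sum>f<n. Qm n p s e f * H f) = (\<Sum>f\<in>{..<n} - insert e s. W (insert f (insert e s)) * H f)"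
proof -
  have "(\<Sum>f<n. Qm n p s e f * H f) = (\<Sum>f\<in>{..<n}. if f \<notin> insert e s then W (insert f (insert e s)) * H f else 0)"
    using assms unfolding Qm_def by (intro sum.cong) (auto simp: insert_commute)
  then show ?thesis by (simp only: sum_if_notin[OF finite_lessThan])
qed

lemma Qm_row0: "e \<in> s \<Longrightarrow> Qm n p s e f = 0"
  unfolding Qm_def by auto

lemma local_sigma:
  assumes s: "s \<in> L k" and kr: "k + 2 \<le> r" and pg: "pos (Suc (Suc k)) G2"
  shows "2 * real (r - k - 1) * (\<Sum>e\<in>{..<n} - s. W (insert e s) * psi (Dn (Suc k) G2 (insert e s)))
   \<le> (\<Sum>e\<in>{..<n} - s. \<Sum>f\<in>{..<n} - insert e s. W (insert f (insert e s)) * psi (G2 (insert f (insert e s))))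
     + real (r - k) * real (r - k - 1) * W s * psi (Dn k (Dn (Suc k) G2) s)"
proof (cases "W s > 0")
  case False
  then have W0: "W s = 0" using W_nn[of s] by simp
  have "W (insert e s) = 0" for e using W_zero_sup[OF W0] by auto
  moreover have "W (insert f (insert e s)) = 0" for e f using W_zero_sup[OF W0, of "insert f (insert e s)"] by auto
  ultimately show ?thesis using W0 by simp
next
  case Ws: True
  define c1 where "c1 = real (r - Suc k)"
  have c1: "c1 > 0" unfolding c1_def using kr by simp
  define D where "D = Dn (Suc k) G2"
  define Q where "Q = Qm n p s"
  define h where "h = (\<lambda>e f. G2 (insert e (insert f s)))"
  have sL: "s \<subseteq> {..<n}" "card s = k" "finite s" using s L_sub L_card L_finite_mem by auto
  have esL: "insert e s \<in> L (Suc k)" if "e \<in> {..<n} - s" for e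
    using that sL unfolding L_def by auto
  have row: "(\<Sum>f<n. Q e f) = (if e \<notin> s then c1 * W (insert e s) else 0)" if "e < n" for e
  proof (cases "e \<in> s")
    case True then show ?thesis unfolding Q_def by (simp add: Qm_row0)
  next
    case False
    have "(\<Sum>f<n. Q e f) = (\<Sum>f<n. Qm n p s e f * 1)" unfolding Q_def by simp
    also have "\<dots> = (\<Sum>f\<in>{..<n} - insert e s. W (insert f (insert e s)))"
      using Qm_row[OF False, of "\<lambda>_. 1"] by simp
    also have "\<dots> = real (r - card (insert e s)) * W (insert e s)"
      by (rule K1) (use sL that in auto)
    finally show ?thesis using False sL unfolding c1_def by simp
  qed
  have rowh: "(\<Sum>f<n. Q e f * h e f) = (if e \<notin> s then c1 * W (insert e s) * D (insert e s) else 0)" if "e < n" for e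
  proof (cases "e \<in> s")
    case True then show ?thesis unfolding Q_def by (simp add: Qm_row0)
  next
    case False
    have "(\<Sum>f<n. Q e f * h e f) = (\<Sum>f\<in>{..<n} - insert e s. W (insert f (insert e s)) * h e f)"
      unfolding Q_def by (rule Qm_row[OF False])
    also have "\<dots> = (\<Sum>f\<in>{..<n} - insert e s. W (insert f (insert e s)) * G2 (insert f (insert e s)))"
      unfolding h_def by (intro sum.cong) (auto simp: insert_commute)
    also have "\<dots> = real (r - Suc k) * W (insert e s) * D (insert e s)"
    proof -
      have "insert e s \<in> L (Suc k)" using esL that False by auto
      then show ?thesis unfolding D_def using sumW_Dn by simp
    qed
    finally show ?thesis using False unfolding c1_def by simp
  qed
  have rowhl: "(\<Sum>f<n. Q e f * h e f * ln (h e f)) = (if e \<notin> s then (\<Sum>f\<in>{..<n} - insert e s. W (insert f (insert e s)) * psi (G2 (insert f (insert e s)))) else 0)" if "e < n" for e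
  proof (cases "e \<in> s")
    case True then show ?thesis unfolding Q_def by (simp add: Qm_row0)
  next
    case False
    have "(\<Sum>f<n. Q e f * h e f * ln (h e f)) = (\<Sum>f<n. Qm n p s e f * (h e f * ln (h e f)))"
      unfolding Q_def by (simp add: mult.assoc)
    also have "\<dots> = (\<Sum>f\<in>{..<n} - insert e s. W (insert f (insert e s)) * (h e f * ln (h e f)))"
      by (rule Qm_row[OF False])
    also have "\<dots> = (\<Sum>f\<in>{..<n} - insert e s. W (insert f (insert e s)) * psi (G2 (insert f (insert e s))))"
      unfolding h_def psi_def by (intro sum.cong) (auto simp: insert_commute)
    finally show ?thesis using False by simp
  qed
  have sumWs: "(\<Sum>e\<in>{..<n} - s. W (insert e s)) = real (r - k) * W s"
    using K1[OF sL(1)] sL by simp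
  have A: "(\<Sum>e<n. \<Sum>f<n. Q e f) = c1 * (real (r - k) * W s)"
  proof -
    have "(\<Sum>e<n. \<Sum>f<n. Q e f) = (\<Sum>e\<in>{..<n}. if e \<notin> s then c1 * W (insert e s) else 0)"
      using row by (intro sum.cong) auto
    also have "\<dots> = c1 * (\<Sum>e\<in>{..<n} - s. W (insert e s))"
      by (simp add: sum_if_notin sum_distrib_left)
    finally show ?thesis using sumWs by simp
  qed
  have Apos: "(\<Sum>e<n. \<Sum>f<n. Q e f) > 0" unfolding A using c1 Ws kr by simp
  have bb1: "(\<Sum>e<n. bm n p s e) \<noteq> 0"
  proof -
    have "(\<Sum>e<n. bm n p s e) = (\<Sum>e\<in>{..<n}. if e \<notin> s then W (insert e s) else 0)"
      unfolding bm_def by simp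
    also have "\<dots> = real (r - k) * W s" by (simp add: sum_if_notin sumWs)
    finally show ?thesis using Ws kr by simp
  qed
  have Qnn: "Q e f \<ge> 0" for e f unfolding Q_def Qm_def using W_nn by simp
  have Qsym: "Q e f = Q f e" for e f unfolding Q_def Qm_def by (auto simp: insert_commute)
  have hsym: "h e f = h f e" for e f unfolding h_def by (simp add: insert_commute)
  have hpos: "h e f > 0" if "e \<in> {..<n}" "f \<in> {..<n}" "Q e f > 0" for e f
  proof -
    have ef: "e \<noteq> f" "e \<notin> s" "f \<notin> s" and Wp: "W (insert e (insert f s)) > 0"
      using that(3) unfolding Q_def Qm_def by (auto split: if_splits)
    have "insert e (insert f s) \<in> L (Suc (Suc k))" using ef that sL unfolding L_def by auto
    then show ?thesis using Wp pg unfolding pos_def h_def by auto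
  qed
  have LCs: "W s * (\<Sum>e\<in>{..<n}. \<Sum>f\<in>{..<n}. v e * v f * Q e f) \<le> (\<Sum>e\<in>{..<n}. bm n p s e * v e)^2" for v
    using LC[OF sL(1) Ws] unfolding Q_def by simp
  note loc = loc_ineq[of "{..<n}" Q h, OF _ Qnn Qsym hpos hsym Ws LCs bb1 Apos, simplified]
  have L1: "(\<Sum>e<n. (\<Sum>f<n. Q e f * h e f) * ln ((\<Sum>f<n. Q e f * h e f) / (\<Sum>f<n. Q e f)))
      = c1 * (\<Sum>e\<in>{..<n} - s. W (insert e s) * psi (D (insert e s)))"
  proof -
    have "(\<Sum>e<n. (\<Sum>f<n. Q e f * h e f) * ln ((\<Sum>f<n. Q e f * h e f) / (\<Sum>f<n. Q e f)))
        = (\<Sum>e\<in>{..<n}. if e \<notin> s then c1 * (W (insert e s) * psi (D (insert e s))) else 0)"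
    proof (rule sum.cong[OF refl])
      fix e assume e: "e \<in> {..<n}"
      show "(\<Sum>f<n. Q e f * h e f) * ln ((\<Sum>f<n. Q e f * h e f) / (\<Sum>f<n. Q e f))
          = (if e \<notin> s then c1 * (W (insert e s) * psi (D (insert e s))) else 0)"
      proof (cases "e \<in> s")
        case True then show ?thesis using row[of e] rowh[of e] e by simp
      next
        case False
        show ?thesis
        proof (cases "W (insert e s) > 0")
          case True
          have "c1 * W (insert e s) * D (insert e s) / (c1 * W (insert e s)) = D (insert e s)"
            using True c1 by simp
          then show ?thesis using row[of e] rowh[of e] e False unfolding psi_def by simp
        next
          case F2: False
          then have "W (insert e s) = 0" using W_nn[of "insert e s"] by simp
          then show ?thesis using row[of e] rowh[of e] e False by simp
        qed
      qed
    qed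
    also have "\<dots> = c1 * (\<Sum>e\<in>{..<n} - s. W (insert e s) * psi (D (insert e s)))"
      by (simp only: sum_if_notin[OF finite_lessThan] sum_distrib_left)
    finally show ?thesis .
  qed
  have R1: "(\<Sum>e<n. \<Sum>f<n. Q e f * h e f * ln (h e f))
      = (\<Sum>e\<in>{..<n} - s. \<Sum>f\<in>{..<n} - insert e s. W (insert f (insert e s)) * psi (G2 (insert f (insert e s))))"
  proof -
    have "(\<Sum>e<n. \<Sum>f<n. Q e f * h e f * ln (h e f))
      = (\<Sum>e\<in>{..<n}. if e \<notin> s then (\<Sum>f\<in>{..<n} - insert e s. W (insert f (insert e s)) * psi (G2 (insert f (insert e s)))) else 0)"
      using rowhl by (intro sum.cong) auto
    then show ?thesis by (simp only: sum_if_notin[OF finite_lessThan])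
  qed
  have SS: "(\<Sum>e<n. \<Sum>f<n. Q e f * h e f) = c1 * (real (r - k) * W s * Dn k D s)"
  proof -
    have "(\<Sum>e<n. \<Sum>f<n. Q e f * h e f) = (\<Sum>e\<in>{..<n}. if e \<notin> s then c1 * (W (insert e s) * D (insert e s)) else 0)"
      using rowh by (intro sum.cong) auto
    also have "\<dots> = c1 * (\<Sum>e\<in>{..<n} - s. W (insert e s) * D (insert e s))"
      by (simp only: sum_if_notin[OF finite_lessThan] sum_distrib_left)
    also have "\<dots> = c1 * (real (r - k) * W s * Dn k D s)"
      using sumW_Dn[OF s] sL by simp
    finally show ?thesis .
  qed
  have R2: "(\<Sum>e<n. \<Sum>f<n. Q e f * h e f) * ln ((\<Sum>e<n. \<Sum>f<n. Q e f * h e f) / (\<Sum>e<n. \<Sum>f<n. Q e f))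
      = c1 * real (r - k) * W s * psi (Dn k D s)"
  proof -
    have "(\<Sum>e<n. \<Sum>f<n. Q e f * h e f) / (\<Sum>e<n. \<Sum>f<n. Q e f) = Dn k D s"
      unfolding SS A using c1 Ws kr by simp
    then show ?thesis unfolding SS psi_def by simp
  qed
  have "2 * (c1 * (\<Sum>e\<in>{..<n} - s. W (insert e s) * psi (D (insert e s))))
     \<le> (\<Sum>e\<in>{..<n} - s. \<Sum>f\<in>{..<n} - insert e s. W (insert f (insert e s)) * psi (G2 (insert f (insert e s))))
       + c1 * real (r - k) * W s * psi (Dn k D s)"
    using loc unfolding L1 R1 R2 .
  moreover have "c1 = real (r - k - 1)" unfolding c1_def by simp
  ultimately show ?thesis unfolding D_def by (simp add: mult.assoc mult.left_commute)
qed

end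

context wc begin

definition X :: "nat \<Rightarrow> (nat set \<Rightarrow> real) \<Rightarrow> real" where
  "X l g = (\<Sum>I\<in>L l. W I * psi (g I))"

lemma Ent_X: "Ent l g = X l g / Z l - psi (\<Sum>I\<in>L l. mu l I * g I)"
  unfolding Ent_def X_def mu_def by (simp add: sum_divide_distrib)

lemma sum_K2_level:
  "(\<Sum>s\<in>L k. \<Sum>e\<in>{..<n} - s. W (insert e s) * psi (G (insert e s))) = real (Suc k) * X (Suc k) G"
proof -
  have "(\<Sum>s\<in>L k. \<Sum>e\<in>{..<n} - s. W (insert e s) * psi (G (insert e s)))
      = (\<Sum>K\<in>L (Suc k). \<Sum>e\<in>K. W (insert e (K - {e})) * psi (G (insert e (K - {e}))))"
    by (rule K2)
  also have "\<dots> = (\<Sum>K\<in>L (Suc k). real (Suc k) * (W K * psi (G K)))"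
  proof (rule sum.cong[OF refl])
    fix K assume K: "K \<in> L (Suc k)"
    have "(\<Sum>e\<in>K. W (insert e (K - {e})) * psi (G (insert e (K - {e})))) = (\<Sum>e\<in>K. W K * psi (G K))"
      by (intro sum.cong) (auto simp: insert_absorb)
    then show "(\<Sum>e\<in>K. W (insert e (K - {e})) * psi (G (insert e (K - {e})))) = real (Suc k) * (W K * psi (G K))"
      using L_card[OF K] by simp
  qed
  finally show ?thesis unfolding X_def by (simp add: sum_distrib_left)
qed

lemma convex_step:
  assumes kr: "k + 2 \<le> r" and pg: "pos (Suc (Suc k)) G2"
  shows "2 * Ent (Suc k) (Dn (Suc k) G2) \<le> Ent k (Dn k (Dn (Suc k) G2)) + Ent (Suc (Suc k)) G2"
proof -
  define G1 where "G1 = Dn (Suc k) G2"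
  define G0 where "G0 = Dn k G1"
  define d where "d = real (r - k)"
  define c1 where "c1 = real (r - k - 1)"
  have c1: "c1 > 0" "d > 0" unfolding c1_def d_def using kr by auto
  have loc: "2 * c1 * (\<Sum>e\<in>{..<n} - s. W (insert e s) * psi (G1 (insert e s)))
   \<le> (\<Sum>e\<in>{..<n} - s. \<Sum>f\<in>{..<n} - insert e s. W (insert f (insert e s)) * psi (G2 (insert f (insert e s))))
     + d * c1 * (W s * psi (G0 s))" if "s \<in> L k" for s
    using local_sigma[OF that kr pg] unfolding G1_def G0_def c1_def d_def by (simp add: mult.assoc)
  have "(\<Sum>s\<in>L k. 2 * c1 * (\<Sum>e\<in>{..<n} - s. W (insert e s) * psi (G1 (insert e s))))
     \<le> (\<Sum>s\<in>L k. (\<Sum>e\<in>{..<n} - s. \<Sum>f\<in>{..<n} - insert e s. W (insert f (insert e s)) * psi (G2 (insert f (insert e s))))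
     + d * c1 * (W s * psi (G0 s)))"
    by (rule sum_mono) (rule loc)
  also have "\<dots> = (\<Sum>s\<in>L k. \<Sum>e\<in>{..<n} - s. \<Sum>f\<in>{..<n} - insert e s. W (insert f (insert e s)) * psi (G2 (insert f (insert e s))))
     + d * c1 * X k G0"
    unfolding X_def by (simp add: sum.distrib sum_distrib_left)
  also have "(\<Sum>s\<in>L k. \<Sum>e\<in>{..<n} - s. \<Sum>f\<in>{..<n} - insert e s. W (insert f (insert e s)) * psi (G2 (insert f (insert e s))))
      = real (Suc k) * (real (Suc (Suc k)) * X (Suc (Suc k)) G2)"
  proof -
    have "(\<Sum>s\<in>L k. \<Sum>e\<in>{..<n} - s. \<Sum>f\<in>{..<n} - insert e s. W (insert f (insert e s)) * psi (G2 (insert f (insert e s))))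
      = (\<Sum>K\<in>L (Suc k). \<Sum>e\<in>K. \<Sum>f\<in>{..<n} - insert e (K - {e}). W (insert f (insert e (K - {e}))) * psi (G2 (insert f (insert e (K - {e})))))"
      by (rule K2)
    also have "\<dots> = (\<Sum>K\<in>L (Suc k). real (Suc k) * (\<Sum>f\<in>{..<n} - K. W (insert f K) * psi (G2 (insert f K))))"
    proof (rule sum.cong[OF refl])
      fix K assume K: "K \<in> L (Suc k)"
      have "(\<Sum>e\<in>K. \<Sum>f\<in>{..<n} - insert e (K - {e}). W (insert f (insert e (K - {e}))) * psi (G2 (insert f (insert e (K - {e})))))
          = (\<Sum>e\<in>K. \<Sum>f\<in>{..<n} - K. W (insert f K) * psi (G2 (insert f K)))"
        by (intro sum.cong) (auto simp: insert_absorb)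
      then show "(\<Sum>e\<in>K. \<Sum>f\<in>{..<n} - insert e (K - {e}). W (insert f (insert e (K - {e}))) * psi (G2 (insert f (insert e (K - {e})))))
          = real (Suc k) * (\<Sum>f\<in>{..<n} - K. W (insert f K) * psi (G2 (insert f K)))"
        using L_card[OF K] by simp
    qed
    also have "\<dots> = real (Suc k) * (\<Sum>K\<in>L (Suc k). \<Sum>f\<in>{..<n} - K. W (insert f K) * psi (G2 (insert f K)))"
      by (simp add: sum_distrib_left)
    also have "(\<Sum>K\<in>L (Suc k). \<Sum>f\<in>{..<n} - K. W (insert f K) * psi (G2 (insert f K))) = real (Suc (Suc k)) * X (Suc (Suc k)) G2"
      by (rule sum_K2_level)
    finally show ?thesis .
  qed
  also have "(\<Sum>s\<in>L k. 2 * c1 * (\<Sum>e\<in>{..<n} - s. W (insert e s) * psi (G1 (insert e s)))) = 2 * c1 * (real (Suc k) * X (Suc k) G1)"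
    by (simp add: sum_distrib_left[symmetric] sum_K2_level)
  finally have ineq: "2 * c1 * (real (Suc k) * X (Suc k) G1) \<le> real (Suc k) * (real (Suc (Suc k)) * X (Suc (Suc k)) G2) + d * c1 * X k G0" .
  have Z1: "real (Suc k) * Z (Suc k) = d * Z k" unfolding d_def by (rule Z_rec)
  have Z2: "real (Suc (Suc k)) * Z (Suc (Suc k)) = c1 * Z (Suc k)" unfolding c1_def using Z_rec[of "Suc k"] by simp
  have Zp: "Z k > 0" "Z (Suc k) > 0" "Z (Suc (Suc k)) > 0" using Z_pos kr by auto
  have M1: "(\<Sum>I\<in>L (Suc k). mu (Suc k) I * G1 I) = (\<Sum>I\<in>L k. mu k I * G0 I)"
    unfolding G0_def using mean_Dn[of k G1] kr by simp
  have M2: "(\<Sum>I\<in>L (Suc (Suc k)). mu (Suc (Suc k)) I * G2 I) = (\<Sum>I\<in>L (Suc k). mu (Suc k) I * G1 I)"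
    unfolding G1_def using mean_Dn[of "Suc k" G2] kr by simp
  have key: "2 * (X (Suc k) G1 / Z (Suc k)) \<le> X k G0 / Z k + X (Suc (Suc k)) G2 / Z (Suc (Suc k))"
  proof -
    have e1: "X (Suc k) G1 / Z (Suc k) = real (Suc k) * X (Suc k) G1 / (d * Z k)"
    proof -
      have "X (Suc k) G1 / Z (Suc k) = real (Suc k) * X (Suc k) G1 / (real (Suc k) * Z (Suc k))"
        by simp
      then show ?thesis unfolding Z1 .
    qed
    have e2: "X (Suc (Suc k)) G2 / Z (Suc (Suc k)) = real (Suc k) * (real (Suc (Suc k)) * X (Suc (Suc k)) G2) / (d * c1 * Z k)"
    proof -
      have "Z (Suc (Suc k)) = c1 * Z (Suc k) / real (Suc (Suc k))" using Z2 by (simp add: field_simps)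
      moreover have "Z (Suc k) = d * Z k / real (Suc k)" using Z1 by (simp add: field_simps)
      ultimately have "Z (Suc (Suc k)) = c1 * d * Z k / (real (Suc (Suc k)) * real (Suc k))" by (simp add: mult.commute mult.assoc)
      then show ?thesis using c1 Zp by (simp add: field_simps)
    qed
    have "2 * c1 * (real (Suc k) * X (Suc k) G1) / (d * c1 * Z k) \<le> (real (Suc k) * (real (Suc (Suc k)) * X (Suc (Suc k)) G2) + d * c1 * X k G0) / (d * c1 * Z k)"
      using ineq c1 Zp by (intro divide_right_mono) auto
    moreover have "2 * c1 * (real (Suc k) * X (Suc k) G1) / (d * c1 * Z k) = 2 * (real (Suc k) * X (Suc k) G1 / (d * Z k))"
      using c1 Zp by (simp add: field_simps)
    moreover have "(real (Suc k) * (real (Suc (Suc k)) * X (Suc (Suc k)) G2) + d * c1 * X k G0) / (d * c1 * Z k)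
        = X k G0 / Z k + real (Suc k) * (real (Suc (Suc k)) * X (Suc (Suc k)) G2) / (d * c1 * Z k)"
      using c1 Zp by (simp add: field_simps)
    ultimately show ?thesis unfolding e1 e2 by simp
  qed
  show ?thesis
    unfolding G1_def[symmetric] G0_def[symmetric] Ent_X M1 M2 using key by simp
qed

end

context wc begin

primrec chain :: "(nat set \<Rightarrow> real) \<Rightarrow> nat \<Rightarrow> nat \<Rightarrow> nat set \<Rightarrow> real" where
  "chain g j 0 = g"
| "chain g j (Suc t) = Dn (j - Suc t) (chain g j t)"

lemma chain_pos: assumes "j \<le> r" "pos j g" shows "t \<le> j \<Longrightarrow> pos (j - t) (chain g j t)"
proof (induction t)
  case 0 then show ?case using assms by simp
next
  case (Suc t)
  have "pos (Suc (j - Suc t)) (chain g j t)" using Suc by (simp add: Suc_diff_Suc)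
  then show ?case using Dn_pos[of "j - Suc t" "chain g j t"] Suc assms by simp
qed

lemma Ent0: "Ent 0 g = 0"
proof -
  have L0: "L 0 = {{}}" unfolding L_def by (auto simp: card_eq_0_iff intro: finite_subset)
  have "mu 0 {} = 1" using Z_pos[of 0] unfolding mu_def Z_def L0 by simp
  then show ?thesis unfolding Ent_def L0 by simp
qed

lemma contraction:
  assumes j: "1 \<le> j" "j \<le> r" and g: "pos j g"
  shows "real j * Ent (j - 1) (Dn (j - 1) g) \<le> real (j - 1) * Ent j g"
proof -
  define E where "E = (\<lambda>i. Ent i (chain g j (j - i)))"
  have step: "chain g j (j - i) = Dn i (chain g j (j - Suc i))" if "i < j" for i
  proof -
    have "j - i = Suc (j - Suc i)" using that by simp
    then show ?thesis using that by simp
  qed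
  have P: "real (Suc i) * E i \<le> real i * E (Suc i)" if "Suc i \<le> j" for i
    using that
  proof (induction i)
    case 0
    then show ?case unfolding E_def by (simp add: Ent0)
  next
    case (Suc i)
    have IH: "real (Suc i) * E i \<le> real i * E (Suc i)" using Suc by simp
    define G2 where "G2 = chain g j (j - Suc (Suc i))"
    have pg: "pos (Suc (Suc i)) G2" unfolding G2_def using chain_pos[OF j(2) g, of "j - Suc (Suc i)"] Suc by simp
    have e1: "chain g j (j - Suc i) = Dn (Suc i) G2" unfolding G2_def using step[of "Suc i"] Suc by simp
    have e0: "chain g j (j - i) = Dn i (Dn (Suc i) G2)" using step[of i] e1 Suc by simp
    have cv: "2 * E (Suc i) \<le> E i + E (Suc (Suc i))"
      unfolding E_def e1 e0 G2_def[symmetric] using convex_step[of i G2] pg Suc j by simp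
    have m: "real (Suc i) * (2 * E (Suc i)) \<le> real (Suc i) * (E i + E (Suc (Suc i)))"
      using cv by (intro mult_left_mono) auto
    have IH': "E i + real i * E i \<le> real i * E (Suc i)" using IH by (simp add: algebra_simps)
    have m': "2 * E (Suc i) + 2 * (real i * E (Suc i)) \<le> E i + real i * E i + E (Suc (Suc i)) + real i * E (Suc (Suc i))"
      using m by (simp add: algebra_simps)
    have "real i * E (Suc i) + 2 * E (Suc i) \<le> E (Suc (Suc i)) + real i * E (Suc (Suc i))"
      using IH' m' by linarith
    then show ?case by (simp add: algebra_simps)
  qed
  have "real (Suc (j - 1)) * E (j - 1) \<le> real (j - 1) * E (Suc (j - 1))" using P[of "j - 1"] j by simp
  moreover have "E (j - 1) = Ent (j - 1) (Dn (j - 1) g)"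
    unfolding E_def using step[of "j - 1"] j by simp
  moreover have "E j = Ent j g" unfolding E_def by simp
  ultimately show ?thesis using j by simp
qed

end

lemma dirichlet_bound:
  fixes \<Omega> :: "'s set" and \<mu> f Pf :: "'s \<Rightarrow> real"
  assumes fin: "finite \<Omega>" and mu: "\<And>x. x \<in> \<Omega> \<Longrightarrow> \<mu> x \<ge> 0" and fpos: "\<And>x. x \<in> \<Omega> \<Longrightarrow> f x > 0"
    and Pf: "\<And>x. x \<in> \<Omega> \<Longrightarrow> Pf x = (\<Sum>y\<in>\<Omega>. P x y * f y)"
    and Pfnn: "\<And>x. x \<in> \<Omega> \<Longrightarrow> Pf x \<ge> 0"
    and sa: "(\<Sum>x\<in>\<Omega>. \<mu> x * f x * (\<Sum>y\<in>\<Omega>. P x y * ln (f y))) = (\<Sum>x\<in>\<Omega>. \<mu> x * Pf x * ln (f x))"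
    and mean: "(\<Sum>x\<in>\<Omega>. \<mu> x * Pf x) = (\<Sum>x\<in>\<Omega>. \<mu> x * f x)"
  shows "dirichlet \<Omega> \<mu> P f (\<lambda>x. ln (f x)) \<ge> entropy \<Omega> \<mu> f - entropy \<Omega> \<mu> Pf"
proof -
  have "dirichlet \<Omega> \<mu> P f (\<lambda>x. ln (f x)) = (\<Sum>x\<in>\<Omega>. \<Sum>y\<in>\<Omega>. (if x = y then \<mu> x * f x * ln (f y) else 0) - \<mu> x * f x * (P x y * ln (f y)))"
    unfolding dirichlet_def by (intro sum.cong refl) (simp add: algebra_simps)
  also have "\<dots> = (\<Sum>x\<in>\<Omega>. \<mu> x * f x * ln (f x)) - (\<Sum>x\<in>\<Omega>. \<mu> x * f x * (\<Sum>y\<in>\<Omega>. P x y * ln (f y)))"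
    using fin by (simp add: sum_subtractf sum_distrib_left)
  finally have D: "dirichlet \<Omega> \<mu> P f (\<lambda>x. ln (f x)) = (\<Sum>x\<in>\<Omega>. \<mu> x * f x * ln (f x)) - (\<Sum>x\<in>\<Omega>. \<mu> x * Pf x * ln (f x))"
    using sa by simp
  have E: "entropy \<Omega> \<mu> f - entropy \<Omega> \<mu> Pf = (\<Sum>x\<in>\<Omega>. \<mu> x * f x * ln (f x)) - (\<Sum>x\<in>\<Omega>. \<mu> x * Pf x * ln (Pf x))"
    unfolding entropy_def mean by (simp add: mult.assoc)
  have "(\<Sum>x\<in>\<Omega>. \<mu> x * (Pf x - f x)) \<le> (\<Sum>x\<in>\<Omega>. \<mu> x * (Pf x * ln (Pf x) - Pf x * ln (f x)))"
  proof (rule sum_mono)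
    fix x assume x: "x \<in> \<Omega>"
    have "Pf x - f x \<le> Pf x * ln (Pf x) - Pf x * ln (f x)"
    proof (cases "Pf x = 0")
      case True then show ?thesis using fpos[OF x] by simp
    next
      case False
      then have u: "Pf x > 0" using Pfnn[OF x] by simp
      have "ln (f x / Pf x) \<le> f x / Pf x - 1" using u fpos[OF x] by (intro ln_le_minus_one) auto
      then have "Pf x * ln (f x / Pf x) \<le> Pf x * (f x / Pf x - 1)" using u by (intro mult_left_mono) auto
      then show ?thesis using u fpos[OF x] by (simp add: ln_div algebra_simps)
    qed
    then show "\<mu> x * (Pf x - f x) \<le> \<mu> x * (Pf x * ln (Pf x) - Pf x * ln (f x))"
      using mu[OF x] by (intro mult_left_mono) auto
  qed
  moreover have "(\<Sum>x\<in>\<Omega>. \<mu> x * (Pf x - f x)) = 0" using mean by (simp add: algebra_simps sum_subtractf)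
  ultimately have "0 \<le> (\<Sum>x\<in>\<Omega>. \<mu> x * Pf x * ln (Pf x)) - (\<Sum>x\<in>\<Omega>. \<mu> x * Pf x * ln (f x))"
    by (simp add: algebra_simps sum_subtractf)
  then show ?thesis unfolding D E by simp
qed

context wc begin

definition Sw :: "nat set \<Rightarrow> nat set set" where
  "Sw I = {J. J \<subseteq> {..<n} \<and> card J = card I \<and> card (I \<inter> J) = card I - 1}"

lemma Sw_single:
  assumes I: "finite I" "I \<noteq> {}" and J: "J \<in> Sw I"
  obtains x e where "I - J = {x}" "J - I = {e}"
proof -
  have fJ: "finite J" using J unfolding Sw_def using finite_subset by blast
  have cI: "card I \<ge> 1" using I by (simp add: Suc_leI card_gt_0_iff)
  have "card (I - J) = card I - card (I \<inter> J)" using I by (metis card_Diff_subset_Int finite_Int)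
  then have "card (I - J) = 1" using J cI unfolding Sw_def by simp
  then obtain x where x: "I - J = {x}" using card_1_singletonE by blast
  have "card (J - I) = card J - card (J \<inter> I)" using fJ by (metis card_Diff_subset_Int finite_Int)
  then have "card (J - I) = 1" using J cI unfolding Sw_def by (simp add: Int_commute)
  then obtain e where e: "J - I = {e}" using card_1_singletonE by blast
  show ?thesis using that x e by blast
qed

lemma RX:
  assumes I: "I \<subseteq> {..<n}" "I \<noteq> {}"
  shows "(\<Sum>x\<in>I. \<Sum>e\<in>{..<n} - I. G x e (insert e (I - {x}))) = (\<Sum>J\<in>Sw I. G (THE x. x \<in> I - J) (THE e. e \<in> J - I) J)"
proof -
  have fI: "finite I" using I finite_subset by blast
  have "(\<Sum>x\<in>I. \<Sum>e\<in>{..<n} - I. G x e (insert e (I - {x}))) = (\<Sum>y\<in>Sigma I (\<lambda>_. {..<n} - I). G (fst y) (snd y) (insert (snd y) (I - {fst y})))"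
    using fI by (simp add: sum.Sigma case_prod_beta)
  also have "\<dots> = (\<Sum>J\<in>Sw I. G (THE x. x \<in> I - J) (THE e. e \<in> J - I) J)"
  proof (rule sum.reindex_bij_witness[where j="\<lambda>y. insert (snd y) (I - {fst y})" and i="\<lambda>J. (THE x. x \<in> I - J, THE e. e \<in> J - I)"])
    fix y assume y: "y \<in> Sigma I (\<lambda>_. {..<n} - I)"
    obtain x e where xe: "y = (x, e)" "x \<in> I" "e \<in> {..<n}" "e \<notin> I" using y by auto
    have d1: "I - insert e (I - {x}) = {x}" using xe by auto
    have d2: "insert e (I - {x}) - I = {e}" using xe by auto
    show "(THE x. x \<in> I - insert (snd y) (I - {fst y}), THE e. e \<in> insert (snd y) (I - {fst y}) - I) = y"
      using d1 d2 xe by simp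
    have "card (insert e (I - {x})) = card I" using xe fI by (simp add: card_Diff_singleton_if)
      (metis One_nat_def Suc_pred card_gt_0_iff empty_iff)
    moreover have "I \<inter> insert e (I - {x}) = I - {x}" using xe by auto
    ultimately show "insert (snd y) (I - {fst y}) \<in> Sw I"
      unfolding Sw_def using xe I fI by (auto simp: card_Diff_singleton_if)
    show "G (THE x. x \<in> I - insert (snd y) (I - {fst y})) (THE e. e \<in> insert (snd y) (I - {fst y}) - I)
            (insert (snd y) (I - {fst y})) = G (fst y) (snd y) (insert (snd y) (I - {fst y}))"
      using d1 d2 xe by simp
  next
    fix J assume J: "J \<in> Sw I"
    obtain x e where xe: "I - J = {x}" "J - I = {e}" using Sw_single[OF fI I(2) J] .
    have tx: "(THE x. x \<in> I - J) = x" using xe by simp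
    have te: "(THE e. e \<in> J - I) = e" using xe by simp
    have "insert e (I - {x}) = J" using xe by blast
    then show "insert (snd (THE x. x \<in> I - J, THE e. e \<in> J - I)) (I - {fst (THE x. x \<in> I - J, THE e. e \<in> J - I)}) = J"
      using tx te by simp
    have "e \<in> {..<n}" using J xe unfolding Sw_def by auto
    then show "(THE x. x \<in> I - J, THE e. e \<in> J - I) \<in> Sigma I (\<lambda>_. {..<n} - I)"
      using tx te xe by auto
  qed
  finally show ?thesis .
qed

end

context wc begin

lemma weight_eq: "weight n r p I = fact (r - card I) * W I"
proof (cases "\<exists>B\<in>bases n p. I \<subseteq> B")
  case True then show ?thesis unfolding weight_def Wt_def by simp
next
  case False
  have e: "{B \<in> bases n p. I \<subseteq> B} = {}" using False by auto
  show ?thesis unfolding weight_def Wt_def e using False by simp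
qed

lemma indep_LP: "indep_k n p k = LP k"
  unfolding LP_def using indep_iff by auto

lemma sum_weight: "(\<Sum>J\<in>indep_k n p k. weight n r p J) = fact (r - k) * Z k"
proof -
  have "(\<Sum>J\<in>indep_k n p k. weight n r p J) = (\<Sum>J\<in>LP k. fact (r - k) * W J)"
    unfolding indep_LP by (intro sum.cong) (auto simp: weight_eq LP_def L_card)
  also have "\<dots> = fact (r - k) * (\<Sum>J\<in>L k. W J)"
    unfolding sum_distrib_left[symmetric]
    by (intro arg_cong[where f="\<lambda>x. fact (r - k) * x"] sum.mono_neutral_left) (auto simp: LP_def less_le W_nn)
  finally show ?thesis unfolding Z_def .
qed

lemma pik_eq: "I \<in> L k \<Longrightarrow> pi_k n r p k I = mu k I"
  unfolding pi_k_def sum_weight weight_eq mu_def by (simp add: L_card)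

lemma Sw_L: "J \<in> Sw I \<Longrightarrow> card I = k \<Longrightarrow> J \<in> L k"
  unfolding Sw_def L_def by auto

lemma fact_step: "k \<le> r \<Longrightarrow> 1 \<le> k \<Longrightarrow> (fact (r - (k - 1)) :: real) = real (r - (k - 1)) * fact (r - k)"
proof -
  assume a: "k \<le> r" "1 \<le> k"
  then have "r - (k - 1) = Suc (r - k)" by simp
  then show ?thesis by simp
qed

end

context wc begin

lemma LP_facts: assumes "I \<in> LP k" shows "I \<in> L k" "W I > 0" "I \<subseteq> {..<n}" "finite I" "card I = k"
  using assms L_sub L_card L_finite_mem unfolding LP_def by auto

lemma du_op:
  assumes k: "1 \<le> k" "k \<le> r" and I: "I \<in> LP k"
  shows "(\<Sum>J\<in>LP k. down_up n r p k I J * \<phi> J) = Up (k - 1) (Dn (k - 1) \<phi>) I"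
proof -
  define c where "c = real (r - (k - 1))"
  have c: "c > 0" unfolding c_def using k by simp
  note IF = LP_facts[OF I]
  have Ine: "I \<noteq> {}" using IF k by auto
  have Wx: "W (I - {x}) > 0" for x using W_mono[of "I - {x}" I] IF by auto
  have wratio: "weight n r p J / (real k * weight n r p J') = W J / (real k * c * W J')"
    if "card J = k" "card J' = k - 1" for J J'
  proof -
    have "weight n r p J' = c * (fact (r - k) * W J')"
      unfolding weight_eq that c_def using fact_step[OF k(2) k(1)] by simp
    moreover have "weight n r p J = fact (r - k) * W J" unfolding weight_eq that ..
    ultimately show ?thesis using c by (simp add: field_simps)
  qed
  have img: "{I'\<in>indep_k n p (k - 1). I' \<subset> I} = (\<lambda>x. I - {x}) ` I"
  proof
    show "{I'\<in>indep_k n p (k - 1). I' \<subset> I} \<subseteq> (\<lambda>x. I - {x}) ` I"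
    proof
      fix I' assume "I' \<in> {I'\<in>indep_k n p (k - 1). I' \<subset> I}"
      then have I': "I' \<in> L (k - 1)" "I' \<subset> I" using indep_iff by auto
      have "finite I'" using I'(2) IF(4) finite_subset by blast
      then have "card (I - I') = card I - card I'" using I'(2) by (simp add: card_Diff_subset)
      then have "card (I - I') = 1" using I' IF k by (simp add: L_card)
      then obtain x where x: "I - I' = {x}" using card_1_singletonE by blast
      then have "I' = I - {x}" "x \<in> I" using I' by auto
      then show "I' \<in> (\<lambda>x. I - {x}) ` I" by auto
    qed
  next
    show "(\<lambda>x. I - {x}) ` I \<subseteq> {I'\<in>indep_k n p (k - 1). I' \<subset> I}"
    proof
      fix I' assume "I' \<in> (\<lambda>x. I - {x}) ` I"
      then obtain x where x: "x \<in> I" "I' = I - {x}" by auto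
      have "I' \<in> L (k - 1)" using x IF unfolding L_def by auto
      then show "I' \<in> {I'\<in>indep_k n p (k - 1). I' \<subset> I}" using x Wx indep_iff by auto
    qed
  qed
  have inj: "inj_on (\<lambda>x. I - {x}) I" unfolding inj_on_def by auto
  have diag: "down_up n r p k I I = (\<Sum>x\<in>I. W I / (real k * c * W (I - {x})))"
  proof -
    have "down_up n r p k I I = (\<Sum>I'\<in>(\<lambda>x. I - {x}) ` I. weight n r p I / (real k * weight n r p I'))"
      unfolding down_up_def img by simp
    also have "\<dots> = (\<Sum>x\<in>I. weight n r p I / (real k * weight n r p (I - {x})))"
      by (rule sum.reindex[OF inj, unfolded comp_def])
    also have "\<dots> = (\<Sum>x\<in>I. W I / (real k * c * W (I - {x})))"
      using IF by (intro sum.cong refl wratio) auto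
    finally show ?thesis .
  qed
  have perx: "Dn (k - 1) \<phi> (I - {x}) / real k = \<phi> I * (W I / (real k * c * W (I - {x})))
      + (\<Sum>e\<in>{..<n} - I. W (insert e (I - {x})) * \<phi> (insert e (I - {x})) / (real k * c * W (I - {x})))"
    if x: "x \<in> I" for x
  proof -
    have s1: "{..<n} - (I - {x}) = insert x ({..<n} - I)" using that IF(3) by blast
    have "(\<Sum>e\<in>{..<n} - (I - {x}). W (insert e (I - {x})) * \<phi> (insert e (I - {x})))
        = W (insert x (I - {x})) * \<phi> (insert x (I - {x})) + (\<Sum>e\<in>{..<n} - I. W (insert e (I - {x})) * \<phi> (insert e (I - {x})))"
      unfolding s1 by (rule sum.insert) (use that in auto)
    also have "insert x (I - {x}) = I" using x by auto
    finally have "Dn (k - 1) \<phi> (I - {x}) = (W I * \<phi> I + (\<Sum>e\<in>{..<n} - I. W (insert e (I - {x})) * \<phi> (insert e (I - {x})))) / (c * W (I - {x}))"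
      unfolding Dn_def c_def by simp
    moreover
    {
      fix S W' :: real
      assume "W' > 0"
      then have "(W I * \<phi> I + S) / (c * W') / real k = \<phi> I * (W I / (real k * c * W')) + S / (real k * c * W')"
        using c k by (simp add: field_simps)
    }
    ultimately show ?thesis using Wx[of x] by (simp add: sum_divide_distrib)
  qed
  have rhs: "Up (k - 1) (Dn (k - 1) \<phi>) I = \<phi> I * down_up n r p k I I
     + (\<Sum>x\<in>I. \<Sum>e\<in>{..<n} - I. W (insert e (I - {x})) * \<phi> (insert e (I - {x})) / (real k * c * W (I - {x})))"
  proof -
    have "Up (k - 1) (Dn (k - 1) \<phi>) I = (\<Sum>x\<in>I. Dn (k - 1) \<phi> (I - {x}) / real k)"
      unfolding Up_def using k by (simp add: sum_divide_distrib)
    also have "\<dots> = (\<Sum>x\<in>I. \<phi> I * (W I / (real k * c * W (I - {x})))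
      + (\<Sum>e\<in>{..<n} - I. W (insert e (I - {x})) * \<phi> (insert e (I - {x})) / (real k * c * W (I - {x}))))"
      by (intro sum.cong refl perx)
    finally show ?thesis unfolding diag by (simp add: sum.distrib sum_distrib_left)
  qed
  have off_rhs: "(\<Sum>x\<in>I. \<Sum>e\<in>{..<n} - I. W (insert e (I - {x})) * \<phi> (insert e (I - {x})) / (real k * c * W (I - {x})))
      = (\<Sum>J\<in>Sw I. W J * \<phi> J / (real k * c * W (I \<inter> J)))"
  proof -
    have "(\<Sum>x\<in>I. \<Sum>e\<in>{..<n} - I. W (insert e (I - {x})) * \<phi> (insert e (I - {x})) / (real k * c * W (I - {x})))
      = (\<Sum>J\<in>Sw I. W J * \<phi> J / (real k * c * W (I - {THE x. x \<in> I - J})))"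
      using RX[OF IF(3) Ine, of "\<lambda>x e J. W J * \<phi> J / (real k * c * W (I - {x}))"] by simp
    also have "\<dots> = (\<Sum>J\<in>Sw I. W J * \<phi> J / (real k * c * W (I \<inter> J)))"
    proof (rule sum.cong[OF refl])
      fix J assume J: "J \<in> Sw I"
      obtain x e where xe: "I - J = {x}" "J - I = {e}" using Sw_single[OF IF(4) Ine J] .
      have "(THE x. x \<in> I - J) = x" using xe by simp
      moreover have "I - {x} = I \<inter> J" using xe by auto
      ultimately show "W J * \<phi> J / (real k * c * W (I - {THE x. x \<in> I - J})) = W J * \<phi> J / (real k * c * W (I \<inter> J))"
        by simp
    qed
    finally show ?thesis .
  qed
  have off_lhs: "(\<Sum>J\<in>LP k - {I}. down_up n r p k I J * \<phi> J) = (\<Sum>J\<in>Sw I. W J * \<phi> J / (real k * c * W (I \<inter> J)))"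
  proof -
    have "(\<Sum>J\<in>LP k - {I}. down_up n r p k I J * \<phi> J) = (\<Sum>J\<in>LP k - {I}. if J \<in> Sw I then W J * \<phi> J / (real k * c * W (I \<inter> J)) else 0)"
    proof (rule sum.cong[OF refl])
      fix J assume J: "J \<in> LP k - {I}"
      note JF = LP_facts[of J k]
      have JS: "J \<in> Sw I \<longleftrightarrow> card (I \<inter> J) = k - 1" using J JF IF unfolding Sw_def by auto
      show "down_up n r p k I J * \<phi> J = (if J \<in> Sw I then W J * \<phi> J / (real k * c * W (I \<inter> J)) else 0)"
      proof (cases "J \<in> Sw I")
        case True
        then have "card (I \<inter> J) = k - 1" using JS by simp
        then have "down_up n r p k I J = W J / (real k * c * W (I \<inter> J))"
          unfolding down_up_def using J wratio[of J "I \<inter> J"] JF by auto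
        then show ?thesis using True by simp
      next
        case False then show ?thesis unfolding down_up_def using J JS by auto
      qed
    qed
    also have "\<dots> = (\<Sum>J\<in>{J\<in>LP k - {I}. J \<in> Sw I}. W J * \<phi> J / (real k * c * W (I \<inter> J)))"
      by (rule sum.inter_filter[symmetric]) simp
    also have "\<dots> = (\<Sum>J\<in>Sw I. W J * \<phi> J / (real k * c * W (I \<inter> J)))"
    proof (rule sum.mono_neutral_left)
      show "finite (Sw I)" unfolding Sw_def by (rule finite_subset[of _ "Pow {..<n}"]) auto
      show "{J \<in> LP k - {I}. J \<in> Sw I} \<subseteq> Sw I" by auto
      show "\<forall>J\<in>Sw I - {J \<in> LP k - {I}. J \<in> Sw I}. W J * \<phi> J / (real k * c * W (I \<inter> J)) = 0"
      proof
        fix J assume J: "J \<in> Sw I - {J \<in> LP k - {I}. J \<in> Sw I}"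
        have "J \<noteq> I" using J IF k unfolding Sw_def by auto
        moreover have "J \<in> L k" using J IF Sw_L by auto
        ultimately have "W J = 0" using J W_nn[of J] unfolding LP_def by auto
        then show "W J * \<phi> J / (real k * c * W (I \<inter> J)) = 0" by simp
      qed
    qed
    finally show ?thesis .
  qed
  have "(\<Sum>J\<in>LP k. down_up n r p k I J * \<phi> J) = down_up n r p k I I * \<phi> I + (\<Sum>J\<in>LP k - {I}. down_up n r p k I J * \<phi> J)"
    using I by (intro sum.remove) auto
  then show ?thesis unfolding rhs off_lhs off_rhs by simp
qed

end

context wc begin

lemma Sw_finite: "finite (Sw I)"
  unfolding Sw_def by (rule finite_subset[of _ "Pow {..<n}"]) auto

lemma ud_op:
  assumes k: "1 \<le> k" "k < r" and I: "I \<in> LP k"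
  shows "(\<Sum>J\<in>LP k. up_down n r p k I J * \<phi> J) = Dn k (Up k \<phi>) I"
proof -
  define c where "c = real (r - k)"
  have c: "c > 0" unfolding c_def using k by simp
  note IF = LP_facts[OF I]
  have Ine: "I \<noteq> {}" using IF k by auto
  define F where "F = (\<lambda>J. W (I \<union> J) * \<phi> J / (real (Suc k) * c * W I))"
  have wratio: "weight n r p (I \<union> J) / ((real k + 1) * weight n r p I) = W (I \<union> J) / (real (Suc k) * c * W I)"
    if "card (I \<union> J) = Suc k" for J
  proof -
    have "r - k = Suc (r - Suc k)" using k by simp
    then have "(fact (r - k) :: real) = c * fact (r - Suc k)" unfolding c_def by simp
    then have "weight n r p I = c * (fact (r - Suc k) * W I)" unfolding weight_eq IF(5) by simp
    moreover have "weight n r p (I \<union> J) = fact (r - Suc k) * W (I \<union> J)" unfolding weight_eq that ..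
    moreover have F0: "(fact (r - Suc k) :: real) > 0" by simp
    moreover have "\<And>F0 a b :: real. F0 > 0 \<Longrightarrow> F0 * a / ((real k + 1) * (c * (F0 * b))) = a / (real (Suc k) * c * b)"
    proof -
      fix F0 a b :: real assume "F0 > 0"
      have "(real k + 1) * (c * (F0 * b)) = F0 * (real (Suc k) * c * b)" by (simp add: algebra_simps)
      then show "F0 * a / ((real k + 1) * (c * (F0 * b))) = a / (real (Suc k) * c * b)"
        using \<open>F0 > 0\<close> by simp
    qed
    ultimately show ?thesis by simp
  qed
  have Upe: "Up k \<phi> (insert e I) = (\<phi> I + (\<Sum>x\<in>I. \<phi> (insert e (I - {x})))) / real (Suc k)"
    if e: "e \<notin> I" for e
  proof -
    have "(\<Sum>x\<in>insert e I. \<phi> (insert e I - {x})) = \<phi> (insert e I - {e}) + (\<Sum>x\<in>I. \<phi> (insert e I - {x}))"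
      using sum.insert[OF IF(4) e, of "\<lambda>x. \<phi> (insert e I - {x})"] by simp
    also have "insert e I - {e} = I" using e by auto
    also have "(\<Sum>x\<in>I. \<phi> (insert e I - {x})) = (\<Sum>x\<in>I. \<phi> (insert e (I - {x})))"
      using e by (intro sum.cong refl) (metis insert_Diff_if singletonD)
    finally show ?thesis unfolding Up_def by simp
  qed
  have K1I: "(\<Sum>e\<in>{..<n} - I. W (insert e I)) = c * W I" using K1[OF IF(3)] IF unfolding c_def by simp
  have rhs: "Dn k (Up k \<phi>) I = \<phi> I / real (Suc k) + (\<Sum>x\<in>I. \<Sum>e\<in>{..<n} - I. F (insert e (I - {x})))"
  proof -
    have "Dn k (Up k \<phi>) I = (\<Sum>e\<in>{..<n} - I. W (insert e I) * Up k \<phi> (insert e I)) / (c * W I)"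
      unfolding Dn_def c_def ..
    also have "\<dots> = (\<Sum>e\<in>{..<n} - I. W (insert e I) * \<phi> I / (real (Suc k) * c * W I) + (\<Sum>x\<in>I. F (insert e (I - {x}))))"
      unfolding sum_divide_distrib
    proof (rule sum.cong[OF refl])
      fix e assume e: "e \<in> {..<n} - I"
      have un: "I \<union> insert e (I - {x}) = insert e I" if "x \<in> I" for x using that by auto
      have "(\<Sum>x\<in>I. F (insert e (I - {x}))) = (\<Sum>x\<in>I. W (insert e I) * \<phi> (insert e (I - {x})) / (real (Suc k) * c * W I))"
        unfolding F_def using un by (intro sum.cong) auto
      also have "\<dots> = W (insert e I) * (\<Sum>x\<in>I. \<phi> (insert e (I - {x}))) / (real (Suc k) * c * W I)"
        by (simp add: sum_distrib_left sum_divide_distrib)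
      finally have "(\<Sum>x\<in>I. F (insert e (I - {x}))) = W (insert e I) * (\<Sum>x\<in>I. \<phi> (insert e (I - {x}))) / (real (Suc k) * c * W I)" .
      moreover have "W (insert e I) * Up k \<phi> (insert e I) / (c * W I)
         = W (insert e I) * \<phi> I / (real (Suc k) * c * W I) + W (insert e I) * (\<Sum>x\<in>I. \<phi> (insert e (I - {x}))) / (real (Suc k) * c * W I)"
        using Upe[of e] e by (simp add: add_divide_distrib distrib_left)
      ultimately show "W (insert e I) * Up k \<phi> (insert e I) / (c * W I) = W (insert e I) * \<phi> I / (real (Suc k) * c * W I) + (\<Sum>x\<in>I. F (insert e (I - {x})))"
        by simp
    qed
    also have "\<dots> = (\<Sum>e\<in>{..<n} - I. W (insert e I)) * \<phi> I / (real (Suc k) * c * W I) + (\<Sum>e\<in>{..<n} - I. \<Sum>x\<in>I. F (insert e (I - {x})))"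
      by (simp add: sum.distrib sum_distrib_right sum_divide_distrib)
    also have "(\<Sum>e\<in>{..<n} - I. W (insert e I)) * \<phi> I / (real (Suc k) * c * W I) = \<phi> I / real (Suc k)"
      unfolding K1I using c IF by simp
    also have "(\<Sum>e\<in>{..<n} - I. \<Sum>x\<in>I. F (insert e (I - {x}))) = (\<Sum>x\<in>I. \<Sum>e\<in>{..<n} - I. F (insert e (I - {x})))"
      by (rule sum.swap)
    finally show ?thesis .
  qed
  have off_rhs: "(\<Sum>x\<in>I. \<Sum>e\<in>{..<n} - I. F (insert e (I - {x}))) = (\<Sum>J\<in>Sw I. F J)"
    using RX[OF IF(3) Ine, of "\<lambda>x e J. F J"] by simp
  have T: "{J\<in>LP k - {I}. I \<union> J \<in> LP (Suc k)} = {J\<in>Sw I. W (I \<union> J) > 0}"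
  proof (intro set_eqI iffI)
    fix J assume J: "J \<in> {J\<in>LP k - {I}. I \<union> J \<in> LP (Suc k)}"
    note JF = LP_facts[of J k]
    have U: "card (I \<union> J) = Suc k" "W (I \<union> J) > 0" using J LP_facts[of "I \<union> J" "Suc k"] by auto
    have "card I + card J = card (I \<union> J) + card (I \<inter> J)" using IF JF J by (intro card_Un_Int) auto
    then have "card (I \<inter> J) = k - 1" using U IF JF J by auto
    then show "J \<in> {J\<in>Sw I. W (I \<union> J) > 0}" using J JF IF U unfolding Sw_def by auto
  next
    fix J assume J: "J \<in> {J\<in>Sw I. W (I \<union> J) > 0}"
    have JS: "J \<subseteq> {..<n}" "card J = k" "card (I \<inter> J) = k - 1" using J IF unfolding Sw_def by auto
    have fJ: "finite J" using JS finite_subset by blast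
    have "card I + card J = card (I \<union> J) + card (I \<inter> J)" using IF fJ by (intro card_Un_Int) auto
    then have cU: "card (I \<union> J) = Suc k" using JS IF k by auto
    have "I \<union> J \<in> LP (Suc k)" using cU J IF JS unfolding LP_def L_def by auto
    moreover have "W J > 0" using W_mono[of J "I \<union> J"] J by auto
    moreover have "J \<noteq> I" using JS IF k by auto
    ultimately show "J \<in> {J\<in>LP k - {I}. I \<union> J \<in> LP (Suc k)}" using JS unfolding LP_def L_def by auto
  qed
  have off_lhs: "(\<Sum>J\<in>LP k - {I}. up_down n r p k I J * \<phi> J) = (\<Sum>J\<in>Sw I. F J)"
  proof -
    have "(\<Sum>J\<in>LP k - {I}. up_down n r p k I J * \<phi> J) = (\<Sum>J\<in>LP k - {I}. if I \<union> J \<in> LP (Suc k) then F J else 0)"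
    proof (rule sum.cong[OF refl])
      fix J assume J: "J \<in> LP k - {I}"
      show "up_down n r p k I J * \<phi> J = (if I \<union> J \<in> LP (Suc k) then F J else 0)"
      proof (cases "I \<union> J \<in> LP (Suc k)")
        case True
        then have "card (I \<union> J) = Suc k" using LP_facts by auto
        then show ?thesis using True J wratio unfolding up_down_def F_def indep_LP by auto
      next
        case False then show ?thesis using J unfolding up_down_def indep_LP by auto
      qed
    qed
    also have "\<dots> = (\<Sum>J\<in>{J\<in>LP k - {I}. I \<union> J \<in> LP (Suc k)}. F J)"
      by (rule sum.inter_filter[symmetric]) simp
    also have "\<dots> = (\<Sum>J\<in>Sw I. F J)"
      unfolding T
    proof (rule sum.mono_neutral_left[OF Sw_finite])
      show "\<forall>J\<in>Sw I - {J\<in>Sw I. W (I \<union> J) > 0}. F J = 0"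
        unfolding F_def using W_nn by (auto simp: less_le)
    qed auto
    finally show ?thesis .
  qed
  have "(\<Sum>J\<in>LP k. up_down n r p k I J * \<phi> J) = up_down n r p k I I * \<phi> I + (\<Sum>J\<in>LP k - {I}. up_down n r p k I J * \<phi> J)"
    using I by (intro sum.remove) auto
  moreover have "up_down n r p k I I = 1 / (real k + 1)" unfolding up_down_def by simp
  ultimately show ?thesis unfolding rhs off_lhs off_rhs by simp
qed

end

lemma mlsc_lower:
  assumes "\<And>f. (\<forall>x\<in>\<Omega>. f x > 0) \<Longrightarrow> entropy \<Omega> \<mu> f \<noteq> 0 \<Longrightarrow> c \<le> dirichlet \<Omega> \<mu> P f (\<lambda>x. ln (f x)) / entropy \<Omega> \<mu> f"
  shows "mlsc \<Omega> \<mu> P \<ge> ereal c"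
  unfolding mlsc_def
proof (rule Inf_greatest)
  fix y assume "y \<in> {ereal (dirichlet \<Omega> \<mu> P f (\<lambda>x. ln (f x)) / entropy \<Omega> \<mu> f) | f. (\<forall>x\<in>\<Omega>. f x > 0) \<and> entropy \<Omega> \<mu> f \<noteq> 0}"
  then obtain f where f: "y = ereal (dirichlet \<Omega> \<mu> P f (\<lambda>x. ln (f x)) / entropy \<Omega> \<mu> f)" "\<forall>x\<in>\<Omega>. f x > 0" "entropy \<Omega> \<mu> f \<noteq> 0"
    by blast
  then show "ereal c \<le> y" using assms by simp
qed

context wc begin

lemma ent_eq: "entropy (indep_k n p k) (pi_k n r p k) g = Ent k g"
proof -
  have "\<And>F. (\<Sum>I\<in>LP k. pi_k n r p k I * F I) = (\<Sum>I\<in>LP k. mu k I * F I)"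
    by (intro sum.cong refl) (simp add: pik_eq LP_def)
  then show ?thesis unfolding entropy_def Ent_alt indep_LP psi_def by simp
qed

lemma pos_of: "(\<forall>x\<in>indep_k n p k. f x > 0) \<Longrightarrow> pos k f"
  unfolding pos_def indep_LP LP_def by auto

lemma sum_LP_mu: "(\<Sum>I\<in>LP k. mu k I * a I * b I) = (\<Sum>I\<in>L k. mu k I * a I * b I)"
  using sum_mu_LP[of k "\<lambda>I. a I * b I"] by (simp add: mult.assoc)

lemma final_step:
  fixes D E E' c :: real
  assumes D: "D \<ge> E - E'" and E': "E' \<le> c * E" and E: "E \<ge> 0" "E \<noteq> 0" and c: "c < 1"
  shows "1 - c \<le> D / E"
proof -
  have "E > 0" using E by (auto simp: less_le)
  have "(1 - c) * E \<le> D" using D E' by (simp add: algebra_simps)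
  then show ?thesis using \<open>E > 0\<close> by (simp add: field_simps)
qed

lemma part1:
  assumes k: "2 \<le> k" "k \<le> r"
  shows "mlsc (indep_k n p k) (pi_k n r p k) (down_up n r p k) \<ge> ereal (1 / real k)"
proof (rule mlsc_lower)
  fix f assume fp: "\<forall>x\<in>indep_k n p k. f x > 0" and en: "entropy (indep_k n p k) (pi_k n r p k) f \<noteq> 0"
  define m where "m = k - 1"
  have km: "k = Suc m" "m < r" using k unfolding m_def by auto
  have pf: "pos k f" using pos_of[OF fp] .
  have pDf: "pos m (Dn m f)" using Dn_pos[of m f] km pf by simp
  have pP: "pos k (Up m (Dn m f))" using Up_pos[OF pDf] km by simp
  have Pf: "(\<Sum>y\<in>LP k. down_up n r p k x y * \<phi> y) = Up m (Dn m \<phi>) x" if "x \<in> LP k" for x \<phi>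
    using du_op[of k x \<phi>] k that unfolding m_def by simp
  have sa: "(\<Sum>x\<in>LP k. mu k x * a x * Up m (Dn m b) x) = (\<Sum>x\<in>LP k. mu k x * Up m (Dn m a) x * b x)" for a b
  proof -
    have "(\<Sum>x\<in>LP k. mu k x * a x * Up m (Dn m b) x) = (\<Sum>I\<in>L m. mu m I * Dn m a I * Dn m b I)"
      unfolding sum_LP_mu using adj_mu[OF km(2), of a "Dn m b"] km by simp
    also have "\<dots> = (\<Sum>x\<in>L k. mu k x * b x * Up m (Dn m a) x)"
      using adj_mu[OF km(2), of b "Dn m a"] km by (simp add: mult.commute mult.left_commute)
    finally show ?thesis unfolding sum_LP_mu[symmetric] by (simp add: mult_ac)
  qed
  have bound: "dirichlet (LP k) (pi_k n r p k) (down_up n r p k) f (\<lambda>x. ln (f x))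
     \<ge> entropy (LP k) (pi_k n r p k) f - entropy (LP k) (pi_k n r p k) (Up m (Dn m f))"
  proof (rule dirichlet_bound)
    show "finite (LP k)" by simp
    show "\<And>x. x \<in> LP k \<Longrightarrow> pi_k n r p k x \<ge> 0" using mu_nn pik_eq unfolding LP_def by auto
    show "\<And>x. x \<in> LP k \<Longrightarrow> f x > 0" using fp indep_LP by auto
    show "\<And>x. x \<in> LP k \<Longrightarrow> Up m (Dn m f) x = (\<Sum>y\<in>LP k. down_up n r p k x y * f y)" using Pf by simp
    show "\<And>x. x \<in> LP k \<Longrightarrow> Up m (Dn m f) x \<ge> 0" using pP unfolding pos_def LP_def by (auto simp: less_imp_le)
    have "(\<Sum>x\<in>LP k. pi_k n r p k x * f x * (\<Sum>y\<in>LP k. down_up n r p k x y * ln (f y)))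
        = (\<Sum>x\<in>LP k. mu k x * f x * Up m (Dn m (\<lambda>y. ln (f y))) x)"
      using Pf pik_eq unfolding LP_def by (intro sum.cong) auto
    also have "\<dots> = (\<Sum>x\<in>LP k. mu k x * Up m (Dn m f) x * ln (f x))" by (rule sa)
    also have "\<dots> = (\<Sum>x\<in>LP k. pi_k n r p k x * Up m (Dn m f) x * ln (f x))"
      using pik_eq unfolding LP_def by (intro sum.cong) auto
    finally show "(\<Sum>x\<in>LP k. pi_k n r p k x * f x * (\<Sum>y\<in>LP k. down_up n r p k x y * ln (f y)))
        = (\<Sum>x\<in>LP k. pi_k n r p k x * Up m (Dn m f) x * ln (f x))" .
    have "(\<Sum>x\<in>LP k. mu k x * Up m (Dn m f) x) = (\<Sum>x\<in>LP k. mu k x * f x)"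
    proof -
      have "(\<Sum>x\<in>LP k. mu k x * Up m (Dn m f) x) = (\<Sum>x\<in>L (Suc m). mu (Suc m) x * Up m (Dn m f) x)"
        using sum_mu_LP[of k "Up m (Dn m f)"] km by simp
      also have "\<dots> = (\<Sum>x\<in>L m. mu m x * Dn m f x)" by (rule mean_Up[OF km(2)])
      also have "\<dots> = (\<Sum>x\<in>L (Suc m). mu (Suc m) x * f x)" by (rule mean_Dn[OF km(2), symmetric])
      also have "\<dots> = (\<Sum>x\<in>LP k. mu k x * f x)" using sum_mu_LP[of k f] km by simp
      finally show ?thesis .
    qed
    then show "(\<Sum>x\<in>LP k. pi_k n r p k x * Up m (Dn m f) x) = (\<Sum>x\<in>LP k. pi_k n r p k x * f x)"
      using pik_eq unfolding LP_def by (smt (verit, ccfv_SIG) mem_Collect_eq sum.cong)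
  qed
  have e1: "Ent k (Up m (Dn m f)) \<le> Ent m (Dn m f)" using Ent_Up[OF km(2) pDf] km by simp
  have e2: "real k * Ent m (Dn m f) \<le> real m * Ent k f" using contraction[of k f] k pf unfolding m_def by simp
  have EP: "Ent k (Up m (Dn m f)) \<le> (1 - 1 / real k) * Ent k f"
  proof -
    have "Ent m (Dn m f) \<le> real m / real k * Ent k f" using e2 k by (simp add: field_simps)
    moreover have "real m / real k = 1 - 1 / real k" using km by (simp add: field_simps)
    ultimately show ?thesis using e1 by simp
  qed
  have Enn: "Ent k f \<ge> 0" using Ent_nn[OF k(2) pf] .
  have bound': "dirichlet (indep_k n p k) (pi_k n r p k) (down_up n r p k) f (\<lambda>x. ln (f x)) \<ge> Ent k f - Ent k (Up m (Dn m f))"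
    using bound unfolding indep_LP[symmetric] ent_eq .
  have en': "Ent k f \<noteq> 0" using en unfolding ent_eq .
  have c1: "1 - 1 / real k < 1" using k by simp
  have "1 - (1 - 1 / real k) \<le> dirichlet (indep_k n p k) (pi_k n r p k) (down_up n r p k) f (\<lambda>x. ln (f x)) / Ent k f"
    by (rule final_step[OF bound' EP Enn en' c1])
  then have "1 - (1 - 1 / real k) \<le> dirichlet (indep_k n p k) (pi_k n r p k) (down_up n r p k) f (\<lambda>x. ln (f x)) / entropy (indep_k n p k) (pi_k n r p k) f"
    unfolding ent_eq .
  then show "1 / real k \<le> dirichlet (indep_k n p k) (pi_k n r p k) (down_up n r p k) f (\<lambda>x. ln (f x)) / entropy (indep_k n p k) (pi_k n r p k) f"
    by simp
qed

lemma part2: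
  assumes k: "1 \<le> k" "k < r"
  shows "mlsc (indep_k n p k) (pi_k n r p k) (up_down n r p k) \<ge> ereal (1 / (real k + 1))"
proof (rule mlsc_lower)
  fix f assume fp: "\<forall>x\<in>indep_k n p k. f x > 0" and en: "entropy (indep_k n p k) (pi_k n r p k) f \<noteq> 0"
  have pf: "pos k f" using pos_of[OF fp] .
  have pUf: "pos (Suc k) (Up k f)" using Up_pos[OF pf] .
  have pP: "pos k (Dn k (Up k f))" using Dn_pos[OF k(2) pUf] .
  have Pf: "(\<Sum>y\<in>LP k. up_down n r p k x y * \<phi> y) = Dn k (Up k \<phi>) x" if "x \<in> LP k" for x \<phi>
    using ud_op[of k x \<phi>] k that by simp
  have sa: "(\<Sum>x\<in>LP k. mu k x * a x * Dn k (Up k b) x) = (\<Sum>x\<in>LP k. mu k x * Dn k (Up k a) x * b x)" for a b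
  proof -
    have "(\<Sum>x\<in>LP k. mu k x * a x * Dn k (Up k b) x) = (\<Sum>x\<in>L k. mu k x * Dn k (Up k b) x * a x)"
      unfolding sum_LP_mu by (simp add: mult_ac)
    also have "\<dots> = (\<Sum>K\<in>L (Suc k). mu (Suc k) K * Up k b K * Up k a K)"
      using adj_mu[OF k(2), of "Up k b" a] by simp
    also have "\<dots> = (\<Sum>K\<in>L (Suc k). mu (Suc k) K * Up k a K * Up k b K)"
      by (simp add: mult_ac)
    also have "\<dots> = (\<Sum>x\<in>L k. mu k x * Dn k (Up k a) x * b x)"
      using adj_mu[OF k(2), of "Up k a" b] by simp
    finally show ?thesis unfolding sum_LP_mu[symmetric] .
  qed
  have bound: "dirichlet (LP k) (pi_k n r p k) (up_down n r p k) f (\<lambda>x. ln (f x))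
     \<ge> entropy (LP k) (pi_k n r p k) f - entropy (LP k) (pi_k n r p k) (Dn k (Up k f))"
  proof (rule dirichlet_bound)
    show "finite (LP k)" by simp
    show "\<And>x. x \<in> LP k \<Longrightarrow> pi_k n r p k x \<ge> 0" using mu_nn pik_eq unfolding LP_def by auto
    show "\<And>x. x \<in> LP k \<Longrightarrow> f x > 0" using fp indep_LP by auto
    show "\<And>x. x \<in> LP k \<Longrightarrow> Dn k (Up k f) x = (\<Sum>y\<in>LP k. up_down n r p k x y * f y)" using Pf by simp
    show "\<And>x. x \<in> LP k \<Longrightarrow> Dn k (Up k f) x \<ge> 0" using pP unfolding pos_def LP_def by (auto simp: less_imp_le)
    have "(\<Sum>x\<in>LP k. pi_k n r p k x * f x * (\<Sum>y\<in>LP k. up_down n r p k x y * ln (f y)))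
        = (\<Sum>x\<in>LP k. mu k x * f x * Dn k (Up k (\<lambda>y. ln (f y))) x)"
      using Pf pik_eq unfolding LP_def by (intro sum.cong) auto
    also have "\<dots> = (\<Sum>x\<in>LP k. mu k x * Dn k (Up k f) x * ln (f x))" by (rule sa)
    also have "\<dots> = (\<Sum>x\<in>LP k. pi_k n r p k x * Dn k (Up k f) x * ln (f x))"
      using pik_eq unfolding LP_def by (intro sum.cong) auto
    finally show "(\<Sum>x\<in>LP k. pi_k n r p k x * f x * (\<Sum>y\<in>LP k. up_down n r p k x y * ln (f y)))
        = (\<Sum>x\<in>LP k. pi_k n r p k x * Dn k (Up k f) x * ln (f x))" .
    have "(\<Sum>x\<in>LP k. mu k x * Dn k (Up k f) x) = (\<Sum>x\<in>LP k. mu k x * f x)"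
    proof -
      have "(\<Sum>x\<in>LP k. mu k x * Dn k (Up k f) x) = (\<Sum>x\<in>L k. mu k x * Dn k (Up k f) x)"
        using sum_mu_LP[of k "Dn k (Up k f)"] by simp
      also have "\<dots> = (\<Sum>x\<in>L (Suc k). mu (Suc k) x * Up k f x)" by (rule mean_Dn[OF k(2), symmetric])
      also have "\<dots> = (\<Sum>x\<in>L k. mu k x * f x)" by (rule mean_Up[OF k(2)])
      also have "\<dots> = (\<Sum>x\<in>LP k. mu k x * f x)" using sum_mu_LP[of k f] by simp
      finally show ?thesis .
    qed
    then show "(\<Sum>x\<in>LP k. pi_k n r p k x * Dn k (Up k f) x) = (\<Sum>x\<in>LP k. pi_k n r p k x * f x)"
      using pik_eq unfolding LP_def by (smt (verit, ccfv_SIG) mem_Collect_eq sum.cong)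
  qed
  have e1: "real (Suc k) * Ent k (Dn k (Up k f)) \<le> real k * Ent (Suc k) (Up k f)"
    using contraction[of "Suc k" "Up k f"] k pUf by simp
  have e2: "Ent (Suc k) (Up k f) \<le> Ent k f" using Ent_Up[OF k(2) pf] .
  have EP: "Ent k (Dn k (Up k f)) \<le> (1 - 1 / (real k + 1)) * Ent k f"
  proof -
    have "Ent k (Dn k (Up k f)) \<le> real k / (real k + 1) * Ent (Suc k) (Up k f)" using e1 by (simp add: field_simps)
    also have "\<dots> \<le> real k / (real k + 1) * Ent k f" using e2 by (intro mult_left_mono) auto
    also have "real k / (real k + 1) = 1 - 1 / (real k + 1)" by (simp add: field_simps)
    finally show ?thesis .
  qed
  have Enn: "Ent k f \<ge> 0" using Ent_nn[OF _ pf] k by simp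
  have bound': "dirichlet (indep_k n p k) (pi_k n r p k) (up_down n r p k) f (\<lambda>x. ln (f x)) \<ge> Ent k f - Ent k (Dn k (Up k f))"
    using bound unfolding indep_LP[symmetric] ent_eq .
  have en': "Ent k f \<noteq> 0" using en unfolding ent_eq .
  have c1: "1 - 1 / (real k + 1) < 1" by simp
  have "1 - (1 - 1 / (real k + 1)) \<le> dirichlet (indep_k n p k) (pi_k n r p k) (up_down n r p k) f (\<lambda>x. ln (f x)) / Ent k f"
    by (rule final_step[OF bound' EP Enn en' c1])
  then show "1 / (real k + 1) \<le> dirichlet (indep_k n p k) (pi_k n r p k) (up_down n r p k) f (\<lambda>x. ln (f x)) / entropy (indep_k n p k) (pi_k n r p k) f"
    unfolding ent_eq by simp
qed

end

theorem theorem3p1: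
  fixes n r :: nat and \<pi> :: "nat set \<Rightarrow> real"
  assumes "distribution n \<pi>"
    and "r_homogeneous n r \<pi>"
    and "strongly_log_concave_poly n (gen_poly n \<pi>)"
  shows "(\<forall>k. 2 \<le> k \<and> k \<le> r \<longrightarrow>
            mlsc (indep_k n \<pi> k) (pi_k n r \<pi> k) (down_up n r \<pi> k) \<ge> ereal (1 / real k))
       \<and> (\<forall>k. 1 \<le> k \<and> k \<le> r - 1 \<longrightarrow>
            mlsc (indep_k n \<pi> k) (pi_k n r \<pi> k) (up_down n r \<pi> k) \<ge> ereal (1 / (real k + 1)))"
proof -
  have nn: "\<And>S. \<pi> S \<ge> 0" using assms(1) unfolding distribution_def by auto
  have supp: "\<And>S. \<pi> S \<noteq> 0 \<Longrightarrow> S \<subseteq> {..<n} \<and> card S = r" using assms(2) unfolding r_homogeneous_def by auto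
  have ne: "bases n \<pi> \<noteq> {}"
  proof
    assume e: "bases n \<pi> = {}"
    have "(\<Sum>S\<in>Pow {..<n}. \<pi> S) = 0"
    proof (rule sum.neutral, rule ballI)
      fix S assume "S \<in> Pow {..<n}"
      then show "\<pi> S = 0" using e unfolding bases_def by auto
    qed
    then show False using assms(1) unfolding distribution_def by simp
  qed
  interpret wc n r \<pi>
  proof
    show "\<And>S. \<pi> S \<ge> 0" by (rule nn)
    show "\<And>S. \<pi> S \<noteq> 0 \<Longrightarrow> S \<subseteq> {..<n} \<and> card S = r" by (rule supp)
    show "bases n \<pi> \<noteq> {}" by (rule ne)
    show "\<And>s v. s \<subseteq> {..<n} \<Longrightarrow> Wt n \<pi> s > 0 \<Longrightarrow>
       Wt n \<pi> s * (\<Sum>e<n. \<Sum>f<n. v e * v f * Qm n \<pi> s e f) \<le> (\<Sum>e<n. bm n \<pi> s e * v e)^2"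
      using LC_from_slc[OF nn assms(3)] by blast
  qed
  show ?thesis
  proof (intro conjI allI impI)
    fix k assume "2 \<le> k \<and> k \<le> r"
    then show "mlsc (indep_k n \<pi> k) (pi_k n r \<pi> k) (down_up n r \<pi> k) \<ge> ereal (1 / real k)"
      using part1 by blast
  next
    fix k assume "1 \<le> k \<and> k \<le> r - 1"
    then show "mlsc (indep_k n \<pi> k) (pi_k n r \<pi> k) (up_down n r \<pi> k) \<ge> ereal (1 / (real k + 1))"
      using part2 by auto
  qed
qed

end
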